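(* Let $l_1,\dots,l_r\in\mathbb{Z}_{\ge0}$, $x_1,\dots,x_r\in\mathbb Q(q)$, and let $\epsilon'=\epsilon_{M|0}=(0,\dots,0)$ ($M$ zeros). If $M$ is sufficiently large and the $\mathcal U(\epsilon')$-module $\mathcal W_{l_1,\epsilon'}(x_1)\otimes\cdots\otimes\mathcal W_{l_r,\epsilon'}(x_r)$ is irreducible, then the $\mathcal U(\epsilon)$-module $\mathcal W_{l_1,\epsilon}(x_1)\otimes\cdots\otimes\mathcal W_{l_r,\epsilon}(x_r)$ is also irreducible.
   Context: Fix $n\ge4$ and $\epsilon\in\{0,1\}^n$ with $M$ zeros. For $\epsilon^\ast\in\{0,1\}^k$: $\mathbb I=\{1,\dots,k\}$, $I=\{0,\dots,k-1\}$ (indices mod $k$, $0$ identified with $k$), $\alpha_i=\delta_i-\delta_{i+1}$, $\langle\alpha_i,\delta_j^\vee\rangle$ the coefficient of $\delta_j$ in $\alpha_i$, $I_{\rm even}=\{i:\epsilon^\ast_i=\epsilon^\ast_{i+1}\}$, $I_{\rm odd}=I\setminus I_{\rm even}$, $[k]=(q^k-q^{-k})/(q-q^{-1})$, $q_j=q$ if $\epsilon^\ast_j=0$, $q_j=-q^{-1}$ if $\epsilon^\ast_j=1$. $\mathcal U(\epsilon^\ast)$ is generated over $\mathbb Q(q)$ by pairwise commuting invertible $\omega_j$ ($j\in\mathbb I$) and $e_i,f_i$ ($i\in I$) with relations $\omega_je_i\omega_j^{-1}=q_j^{\langle\alpha_i,\delta_j^\vee\rangle}e_i$, $\omega_jf_i\omega_j^{-1}=q_j^{-\langle\alpha_i,\delta_j^\vee\rangle}f_i$,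 $e_if_j-f_je_i=\delta_{ij}(k_i-k_i^{-1})/(q-q^{-1})$ ($k_i=\omega_i\omega_{i+1}^{-1}$), $e_i^2=f_i^2=0$ ($i\in I_{\rm odd}$), commutation of $e_i,e_j$ (and $f_i,f_j$) for non-adjacent $i\ne j$, $e_i^2e_j-(-1)^{\epsilon^\ast_i}[2]e_ie_je_i+e_je_i^2=0$ (and for $f$) for $i\in I_{\rm even}$, $j=i\pm1$, and for $i\in I_{\rm odd}$: $e_ie_{i-1}e_ie_{i+1}-e_ie_{i+1}e_ie_{i-1}+e_{i+1}e_ie_{i-1}e_i-e_{i-1}e_ie_{i+1}e_i+(-1)^{\epsilon^\ast_i}[2]e_ie_{i-1}e_{i+1}e_i=0$ (and for $f$). For $\epsilon^\ast=(0,\dots,0)$ this is the quantum affine algebra $U_q(A^{(1)}_{k-1})$. Tensor products use $\Delta(\omega_j)=\omega_j\otimes\omega_j$, $\Delta(e_i)=e_i\otimes1+k_i^{-1}\otimes e_i$, $\Delta(f_i)=f_i\otimes k_i+1\otimes f_i$. $\mathcal W_{s,\epsilon^\ast}(x)$ has basis $|\mathbf m\rangle$, $\mathbf m=(m_1,\dots,m_k)$ with $m_i\in\mathbb Z_{\ge0}$ ($\epsilon^\ast_i=0$), $m_i\in\{0,1\}$ ($\epsilon^\ast_i=1$), $\sum m_i=s$, and $e_i|\mathbf m\rangle=x^{\delta_{i0}}q^{m_{i+1}-m_i-1}[m_{i+1}]|\mathbf m+\mathbf e_i-\mathbf e_{i+1}\rangle$, $f_i|\mathbf m\rangle=x^{-\delta_{i0}}q^{m_i-m_{i+1}-1}[m_i]|\mathbf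 m-\mathbf e_i+\mathbf e_{i+1}\rangle$ (zero if the new vector is not allowed), $\omega_j|\mathbf m\rangle=q_j^{m_j}|\mathbf m\rangle$ ($\mathbf e_0=\mathbf e_k$). *)

theory Defs
  imports "HOL-Computational_Algebra.Polynomial" "HOL-Computational_Algebra.Fraction_Field"
begin

type_synonym K = "rat poly fract"

definition qq :: K where "qq = Fract [:0, 1:] 1"

definition qint :: "int \<Rightarrow> K" where
  "qint k = (qq powi k - qq powi (- k)) / (qq - inverse qq)"

text \<open>A parity sequence eps* of length k is a list with entries in {0,1};
  eps*_j = eps ! (j - 1) for j in {1..k}.  q_j = q if eps*_j = 0, q_j = -q^-1 otherwise.\<close>
definition qpar :: "nat list \<Rightarrow> nat \<Rightarrow> K" where
  "qpar eps j = (if eps ! (j - 1) = 0 then qq else - inverse qq)"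

definition nzeros :: "nat list \<Rightarrow> nat" where
  "nzeros eps = length (filter (\<lambda>a. a = 0) eps)"

text \<open>Basis of W_{s,eps*}(x): tuples m = (m_1..m_k), stored as nat functions vanishing outside {1..k}.\<close>
definition basisW :: "nat list \<Rightarrow> nat \<Rightarrow> (nat \<Rightarrow> nat) set" where
  "basisW eps s = {m. (\<forall>j. m j \<noteq> 0 \<longrightarrow> j \<in> {1..length eps})
                     \<and> (\<forall>j\<in>{1..length eps}. eps ! (j - 1) = 1 \<longrightarrow> m j \<le> 1)
                     \<and> (\<Sum>j=1..length eps. m j) = s}"

text \<open>Generators of U(eps*): e_i, f_i (i in {0..k-1}), omega_j and omega_j^-1 (j in {1..k}).\<close>
datatype gen = E nat | F nat | W nat | Winv nat

definition valid_gen :: "nat \<Rightarrow> gen \<Rightarrow> bool" where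
  "valid_gen k g = (case g of E i \<Rightarrow> i < k | F i \<Rightarrow> i < k
                    | W j \<Rightarrow> j \<in> {1..k} | Winv j \<Rightarrow> j \<in> {1..k})"

text \<open>For i in {0..k-1}: alpha_i = delta_a - delta_b with a = i (0 identified with k), b = i+1.\<close>
definition ia :: "nat \<Rightarrow> nat \<Rightarrow> nat" where "ia k i = (if i = 0 then k else i)"

text \<open>Matrix entry: coefficient of |m'> in g |m> in W_{s,eps}(x).\<close>
definition ent1 :: "nat list \<Rightarrow> K \<Rightarrow> nat \<Rightarrow> gen \<Rightarrow> (nat \<Rightarrow> nat) \<Rightarrow> (nat \<Rightarrow> nat) \<Rightarrow> K" where
  "ent1 eps x s g m' m =
    (case g of
      E i \<Rightarrow> (let a = ia (length eps) i; b = Suc i in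
        if 0 < m b \<and> m' = m(a := m a + 1, b := m b - 1) \<and> m' \<in> basisW eps s
        then (if i = 0 then x else 1) * qq powi (int (m b) - int (m a) - 1) * qint (int (m b))
        else 0)
    | F i \<Rightarrow> (let a = ia (length eps) i; b = Suc i in
        if 0 < m a \<and> m' = m(a := m a - 1, b := m b + 1) \<and> m' \<in> basisW eps s
        then (if i = 0 then inverse x else 1) * qq powi (int (m a) - int (m b) - 1) * qint (int (m a))
        else 0)
    | W j \<Rightarrow> (if m' = m then qpar eps j ^ m j else 0)
    | Winv j \<Rightarrow> (if m' = m then inverse (qpar eps j ^ m j) else 0))"

text \<open>Eigenvalue of k_i = omega_a omega_b^-1 on |m>.\<close>
definition kval :: "nat list \<Rightarrow> nat \<Rightarrow> (nat \<Rightarrow> nat) \<Rightarrow> K" where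
  "kval eps i m = (let a = ia (length eps) i; b = Suc i in
                    qpar eps a ^ m a * inverse (qpar eps b ^ m b))"

text \<open>Basis of W_{l_1,eps}(x_1) (x) ... (x) W_{l_r,eps}(x_r): lists of basis vectors.\<close>
definition TB :: "nat list \<Rightarrow> nat list \<Rightarrow> (nat \<Rightarrow> nat) list set" where
  "TB eps ls = {bs. length bs = length ls \<and> (\<forall>p<length ls. bs ! p \<in> basisW eps (ls ! p))}"

text \<open>Matrix entries of generators on the tensor product, via the iterated coproduct
  Delta(e_i) = e_i (x) 1 + k_i^-1 (x) e_i, Delta(f_i) = f_i (x) k_i + 1 (x) f_i,
  Delta(omega_j) = omega_j (x) omega_j.\<close>
definition entT :: "nat list \<Rightarrow> K list \<Rightarrow> nat list \<Rightarrow> gen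
                      \<Rightarrow> (nat \<Rightarrow> nat) list \<Rightarrow> (nat \<Rightarrow> nat) list \<Rightarrow> K" where
  "entT eps xs ls g b' b =
    (let r = length ls in
     case g of
      E i \<Rightarrow> (\<Sum>p<r. if (\<forall>t<r. t \<noteq> p \<longrightarrow> b' ! t = b ! t)
               then (\<Prod>t<p. inverse (kval eps i (b ! t))) * ent1 eps (xs ! p) (ls ! p) (E i) (b' ! p) (b ! p)
               else 0)
    | F i \<Rightarrow> (\<Sum>p<r. if (\<forall>t<r. t \<noteq> p \<longrightarrow> b' ! t = b ! t)
               then ent1 eps (xs ! p) (ls ! p) (F i) (b' ! p) (b ! p) * (\<Prod>t\<in>{p<..<r}. kval eps i (b ! t))
               else 0)
    | W j \<Rightarrow> (if b' = b then (\<Prod>t<r. qpar eps j ^ ((b ! t) j)) else 0)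
    | Winv j \<Rightarrow> (if b' = b then inverse (\<Prod>t<r. qpar eps j ^ ((b ! t) j)) else 0))"

definition vecs :: "nat list \<Rightarrow> nat list \<Rightarrow> ((nat \<Rightarrow> nat) list \<Rightarrow> K) set" where
  "vecs eps ls = {v. \<forall>b. b \<notin> TB eps ls \<longrightarrow> v b = 0}"

definition act :: "nat list \<Rightarrow> K list \<Rightarrow> nat list \<Rightarrow> gen
                    \<Rightarrow> ((nat \<Rightarrow> nat) list \<Rightarrow> K) \<Rightarrow> ((nat \<Rightarrow> nat) list \<Rightarrow> K)" where
  "act eps xs ls g v = (\<lambda>b'. if b' \<in> TB eps ls then (\<Sum>b\<in>TB eps ls. entT eps xs ls g b' b * v b) else 0)"

definition submoduleT :: "nat list \<Rightarrow> K list \<Rightarrow> nat list \<Rightarrow> ((nat \<Rightarrow> nat) list \<Rightarrow> K) set \<Rightarrow> bool" where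
  "submoduleT eps xs ls U \<longleftrightarrow>
     U \<subseteq> vecs eps ls \<and> (\<lambda>_. 0) \<in> U
     \<and> (\<forall>u\<in>U. \<forall>v\<in>U. (\<lambda>b. u b + v b) \<in> U)
     \<and> (\<forall>c u. u \<in> U \<longrightarrow> (\<lambda>b. c * u b) \<in> U)
     \<and> (\<forall>g u. valid_gen (length eps) g \<longrightarrow> u \<in> U \<longrightarrow> act eps xs ls g u \<in> U)"

definition irreducibleT :: "nat list \<Rightarrow> K list \<Rightarrow> nat list \<Rightarrow> bool" where
  "irreducibleT eps xs ls \<longleftrightarrow>
     vecs eps ls \<noteq> {\<lambda>_. 0}
     \<and> (\<forall>U. submoduleT eps xs ls U \<longrightarrow> U = {\<lambda>_. 0} \<or> U = vecs eps ls)"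

end

theory Submission
  imports Defs
begin

lemma qq_pow: "qq ^ n = Fract (monom 1 n) 1"
  by (induction n) (simp_all add: qq_def mult_monom monom_Suc mult.commute One_fract_def monom_0 one_pCons)

lemma qq_nz[simp]: "qq \<noteq> 0"
  by (simp add: qq_def eq_fract Zero_fract_def)

lemma qq_pow_inj: "qq ^ a = qq ^ b \<longleftrightarrow> a = b"
  by (simp add: qq_pow eq_fract monom_eq_iff')

lemma qq_powi_inj: "qq powi a = qq powi b \<longleftrightarrow> a = b"
proof
  assume h: "qq powi a = qq powi b"
  have "qq powi (a - b) = 1" using h by (simp add: power_int_diff)
  hence "qq powi (a - b) * qq powi (b - a) = qq powi (b - a)" by simp
  hence "qq powi (b - a) = 1" by (simp add: power_int_add[symmetric])
  show "a = b"
  proof (cases "a \<le> b")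
    case True
    then obtain n where "b - a = int n" by (metis diff_ge_0_iff_ge zero_le_imp_eq_int)
    with \<open>qq powi (b - a) = 1\<close> have "qq ^ n = qq ^ 0" by simp
    hence "n = 0" using qq_pow_inj by blast
    thus ?thesis using \<open>b - a = int n\<close> by simp
  next
    case False
    then obtain n where "a - b = int n" by (metis diff_ge_0_iff_ge nle_le zero_le_imp_eq_int)
    with \<open>qq powi (a - b) = 1\<close> have "qq ^ n = qq ^ 0" by simp
    hence "n = 0" using qq_pow_inj by blast
    thus ?thesis using \<open>a - b = int n\<close> by simp
  qed
qed simp

lemma qint_nz: "k \<noteq> 0 \<Longrightarrow> qint k \<noteq> 0"
proof -
  assume k: "k \<noteq> 0"
  have d: "qq - inverse qq \<noteq> 0"
  proof
    assume "qq - inverse qq = 0"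
    hence "qq * qq = 1" by (simp add: field_simps)
    hence "qq ^ 2 = qq ^ 0" by (simp add: power2_eq_square)
    thus False by (simp only: qq_pow_inj)
  qed
  have "qq powi k \<noteq> qq powi (-k)" using k qq_powi_inj by auto
  thus ?thesis using d by (simp add: qint_def)
qed

lemma qint_1[simp]: "qint 1 = 1"
proof -
  have d: "qq - inverse qq \<noteq> 0"
  proof
    assume "qq - inverse qq = 0"
    hence "qq * qq = 1" by (simp add: field_simps)
    hence "qq ^ 2 = qq ^ 0" by (simp add: power2_eq_square)
    thus False by (simp only: qq_pow_inj)
  qed
  thus ?thesis by (simp add: qint_def power_int_minus)
qed

lemma qpar_nz[simp]: "qpar eps j \<noteq> 0"
  by (simp add: qpar_def)

lemma qpar_pow_inj: "qpar eps j ^ a = qpar eps j ^ b \<longleftrightarrow> a = b"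
proof
  assume h: "qpar eps j ^ a = qpar eps j ^ b"
  show "a = b"
  proof (cases "eps ! (j - 1) = 0")
    case True thus ?thesis using h by (simp add: qpar_def qq_pow_inj)
  next
    case False
    hence "(- inverse qq) ^ a = (- inverse qq) ^ b" using h by (simp add: qpar_def)
    hence "((- inverse qq) ^ a) ^ 2 = ((- inverse qq) ^ b) ^ 2" by simp
    hence "(inverse qq) ^ (2*a) = (inverse qq) ^ (2*b)"
      by (simp add: power_mult[symmetric] power_mult_distrib mult.commute)
    hence "qq ^ (2*a) = qq ^ (2*b)" by (simp add: power_inverse)
    thus ?thesis using qq_pow_inj by simp
  qed
qed simp

definition dl :: "(nat \<Rightarrow> nat) list \<Rightarrow> (nat \<Rightarrow> nat) list \<Rightarrow> K" where
  "dl b = (\<lambda>b'. if b' = b then 1 else 0)"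

definition mvt :: "nat \<Rightarrow> nat \<Rightarrow> (nat \<Rightarrow> nat) \<Rightarrow> (nat \<Rightarrow> nat)" where
  "mvt s t m = m(s := m s - 1, t := m t + 1)"

fun src :: "nat \<Rightarrow> gen \<Rightarrow> nat" where
  "src k (E i) = Suc i" | "src k (F i) = ia k i" | "src k _ = 0"
fun tgt :: "nat \<Rightarrow> gen \<Rightarrow> nat" where
  "tgt k (E i) = ia k i" | "tgt k (F i) = Suc i" | "tgt k _ = 0"
fun isEF :: "nat \<Rightarrow> gen \<Rightarrow> bool" where
  "isEF k (E i) = (i < k)" | "isEF k (F i) = (i < k)" | "isEF k _ = False"
fun Xf :: "gen \<Rightarrow> K \<Rightarrow> K" where
  "Xf (E i) x = (if i = 0 then x else 1)" | "Xf (F i) x = (if i = 0 then inverse x else 1)"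
| "Xf _ x = 1"
fun side :: "nat \<Rightarrow> gen \<Rightarrow> nat \<Rightarrow> nat set" where
  "side r (E i) p = {..<p}" | "side r (F i) p = {p<..<r}" | "side r _ p = {}"

definition hh :: "nat list \<Rightarrow> (nat \<Rightarrow> nat) \<Rightarrow> nat \<Rightarrow> K" where
  "hh eps m c = qpar eps c ^ m c"

definition cf :: "nat list \<Rightarrow> K list \<Rightarrow> nat list \<Rightarrow> gen \<Rightarrow> nat \<Rightarrow> (nat \<Rightarrow> nat) list \<Rightarrow> K" where
  "cf eps xs ls g p b = (let k = length eps; s = src k g; t = tgt k g; m = b ! p in
     (\<Prod>u\<in>side (length ls) g p. hh eps (b ! u) s / hh eps (b ! u) t)
     * (Xf g (xs ! p) * qq powi (int (m s) - int (m t) - 1) * qint (int (m s))))"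

lemma TB_len: "b \<in> TB eps ls \<Longrightarrow> length b = length ls"
  by (simp add: TB_def)

lemma TB_upd: "b \<in> TB eps ls \<Longrightarrow> p < length ls \<Longrightarrow> m \<in> basisW eps (ls ! p) \<Longrightarrow> b[p := m] \<in> TB eps ls"
  by (auto simp: TB_def nth_list_update)

lemma list_upd_iff:
  assumes "length b' = length b" "p < length b"
  shows "((\<forall>t<length b. t \<noteq> p \<longrightarrow> b' ! t = b ! t) \<and> b' ! p = m) \<longleftrightarrow> b' = b[p := m]"
  using assms by (auto simp: list_eq_iff_nth_eq nth_list_update)

lemma finite_basisW: "finite (basisW eps s)"
proof -
  have "basisW eps s \<subseteq> {f. \<forall>x. (x \<in> {1..length eps} \<longrightarrow> f x \<in> {0..s}) \<and> (x \<notin> {1..length eps} \<longrightarrow> f x = 0)}"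
  proof (safe)
    fix f x assume f: "f \<in> basisW eps s" and x: "x \<in> {1..length eps}"
    have "f x \<le> (\<Sum>j=1..length eps. f j)" using x by (intro member_le_sum) auto
    thus "f x \<in> {0..s}" using f by (simp add: basisW_def)
  next
    fix f x assume f: "f \<in> basisW eps s" and x: "x \<notin> {1..length eps}"
    thus "f x = 0" by (auto simp: basisW_def)
  qed
  thus ?thesis by (rule finite_subset) (intro finite_set_of_finite_funs; simp)
qed

lemma finite_TB: "finite (TB eps ls)"
proof -
  let ?A = "\<Union>p<length ls. basisW eps (ls ! p)"
  have "finite ?A" using finite_basisW by blast
  moreover have "TB eps ls \<subseteq> {xs. set xs \<subseteq> ?A \<and> length xs = length ls}"
  proof
    fix x assume "x \<in> TB eps ls"
    hence "length x = length ls" "\<forall>p<length ls. x ! p \<in> basisW eps (ls ! p)" by (auto simp: TB_def)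
    thus "x \<in> {xs. set xs \<subseteq> ?A \<and> length xs = length ls}" by (auto simp: in_set_conv_nth) (meson lessThan_iff)
  qed
  ultimately show ?thesis using finite_lists_length_eq finite_subset by blast
qed

lemma act_dl_gen:
  assumes "b \<in> TB eps ls"
  shows "act eps xs ls g (dl b) b' = (if b' \<in> TB eps ls then entT eps xs ls g b' b else 0)"
proof -
  have "(\<Sum>b''\<in>TB eps ls. entT eps xs ls g b' b'' * dl b b'') = entT eps xs ls g b' b"
    using assms finite_TB by (simp add: dl_def if_distrib sum.delta cong: if_cong)
  thus ?thesis by (simp add: act_def)
qed

lemma ia_ne: "2 \<le> k \<Longrightarrow> ia k i \<noteq> Suc i"
  by (simp add: ia_def)

lemma ent1_E:
  assumes "2 \<le> length eps"
  shows "ent1 eps x s (E i) m' m = (if 0 < m (Suc i) \<and> m' = mvt (Suc i) (ia (length eps) i) m \<and> m' \<in> basisW eps s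
     then (if i = 0 then x else 1) * qq powi (int (m (Suc i)) - int (m (ia (length eps) i)) - 1) * qint (int (m (Suc i))) else 0)"
proof -
  have ne: "ia (length eps) i \<noteq> Suc i" using ia_ne assms by blast
  have mv: "m(ia (length eps) i := m (ia (length eps) i) + 1, Suc i := m (Suc i) - 1) = mvt (Suc i) (ia (length eps) i) m"
    using ne by (auto simp: mvt_def fun_eq_iff)
  show ?thesis unfolding ent1_def gen.case Let_def mv ..
qed

lemma ent1_F:
  assumes "2 \<le> length eps"
  shows "ent1 eps x s (F i) m' m = (if 0 < m (ia (length eps) i) \<and> m' = mvt (ia (length eps) i) (Suc i) m \<and> m' \<in> basisW eps s
     then (if i = 0 then inverse x else 1) * qq powi (int (m (ia (length eps) i)) - int (m (Suc i)) - 1) * qint (int (m (ia (length eps) i))) else 0)"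
proof -
  have ne: "ia (length eps) i \<noteq> Suc i" using ia_ne assms by blast
  have mv: "m(ia (length eps) i := m (ia (length eps) i) - 1, Suc i := m (Suc i) + 1) = mvt (ia (length eps) i) (Suc i) m"
    using ne by (auto simp: mvt_def fun_eq_iff)
  show ?thesis unfolding ent1_def gen.case Let_def mv ..
qed

lemma entT_EF:
  assumes b: "b \<in> TB eps ls" and b': "b' \<in> TB eps ls" and k: "2 \<le> length eps" and g: "isEF (length eps) g"
  shows "entT eps xs ls g b' b =
    (\<Sum>p<length ls. if 0 < (b ! p) (src (length eps) g)
        \<and> mvt (src (length eps) g) (tgt (length eps) g) (b ! p) \<in> basisW eps (ls ! p)
        \<and> b' = b[p := mvt (src (length eps) g) (tgt (length eps) g) (b ! p)]
      then cf eps xs ls g p b else 0)"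
proof -
  let ?k = "length eps" and ?r = "length ls"
  have lb: "length b = ?r" using b TB_len by blast
  have lb': "length b' = ?r" using b' TB_len by blast
  show ?thesis
  proof (cases g)
    case (E i)
    show ?thesis unfolding E entT_def Let_def gen.case
    proof (intro sum.cong refl)
      fix p assume p: "p \<in> {..<?r}"
      let ?mv = "mvt (Suc i) (ia ?k i) (b ! p)"
      have iff: "((\<forall>t<?r. t \<noteq> p \<longrightarrow> b' ! t = b ! t) \<and> b' ! p = ?mv) \<longleftrightarrow> b' = b[p := ?mv]"
        using list_upd_iff[of b' b p] lb lb' p by simp
      have inv: "(\<Prod>t<p. inverse (kval eps i (b ! t))) = (\<Prod>u<p. hh eps (b ! u) (Suc i) / hh eps (b ! u) (ia ?k i))"
        by (intro prod.cong refl) (simp add: kval_def hh_def Let_def divide_inverse mult.commute)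
      have cf: "cf eps xs ls (E i) p b = (\<Prod>t<p. inverse (kval eps i (b ! t))) * ((if i = 0 then xs ! p else 1) * qq powi (int ((b!p) (Suc i)) - int ((b!p) (ia ?k i)) - 1) * qint (int ((b!p) (Suc i))))"
        unfolding cf_def Let_def inv by simp
      show "(if \<forall>t<?r. t \<noteq> p \<longrightarrow> b' ! t = b ! t
            then (\<Prod>t<p. inverse (kval eps i (b ! t))) * ent1 eps (xs ! p) (ls ! p) (E i) (b' ! p) (b ! p) else 0) =
           (if 0 < (b ! p) (src ?k (E i)) \<and> mvt (src ?k (E i)) (tgt ?k (E i)) (b ! p) \<in> basisW eps (ls ! p) \<and>
              b' = b[p := mvt (src ?k (E i)) (tgt ?k (E i)) (b ! p)]
            then cf eps xs ls (E i) p b else 0)"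
      proof (cases "b' = b[p := ?mv]")
        case True
        hence c1: "\<forall>t<?r. t \<noteq> p \<longrightarrow> b' ! t = b ! t" and c2: "b' ! p = ?mv" using iff by blast+
        show ?thesis unfolding src.simps tgt.simps if_P[OF c1] ent1_E[OF k] cf using True c2 by simp
      next
        case False
        hence "\<not> ((\<forall>t<?r. t \<noteq> p \<longrightarrow> b' ! t = b ! t) \<and> b' ! p = ?mv)" using iff by blast
        thus ?thesis unfolding src.simps tgt.simps ent1_E[OF k] using False by auto
      qed
    qed
  next
    case (F i)
    show ?thesis unfolding F entT_def Let_def gen.case
    proof (intro sum.cong refl)
      fix p assume p: "p \<in> {..<?r}"
      let ?mv = "mvt (ia ?k i) (Suc i) (b ! p)"
      have iff: "((\<forall>t<?r. t \<noteq> p \<longrightarrow> b' ! t = b ! t) \<and> b' ! p = ?mv) \<longleftrightarrow> b' = b[p := ?mv]"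
        using list_upd_iff[of b' b p] lb lb' p by simp
      have inv: "(\<Prod>t\<in>{p<..<?r}. kval eps i (b ! t)) = (\<Prod>u\<in>{p<..<?r}. hh eps (b ! u) (ia ?k i) / hh eps (b ! u) (Suc i))"
        by (intro prod.cong refl) (simp add: kval_def hh_def Let_def divide_inverse)
      have cf: "cf eps xs ls (F i) p b = ((if i = 0 then inverse (xs ! p) else 1) * qq powi (int ((b!p) (ia ?k i)) - int ((b!p) (Suc i)) - 1) * qint (int ((b!p) (ia ?k i)))) * (\<Prod>t\<in>{p<..<?r}. kval eps i (b ! t))"
        unfolding cf_def Let_def inv by (simp add: mult.commute)
      show "(if \<forall>t<?r. t \<noteq> p \<longrightarrow> b' ! t = b ! t
            then ent1 eps (xs ! p) (ls ! p) (F i) (b' ! p) (b ! p) * (\<Prod>t\<in>{p<..<?r}. kval eps i (b ! t)) else 0) =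
           (if 0 < (b ! p) (src ?k (F i)) \<and> mvt (src ?k (F i)) (tgt ?k (F i)) (b ! p) \<in> basisW eps (ls ! p) \<and>
              b' = b[p := mvt (src ?k (F i)) (tgt ?k (F i)) (b ! p)]
            then cf eps xs ls (F i) p b else 0)"
      proof (cases "b' = b[p := ?mv]")
        case True
        hence c1: "\<forall>t<?r. t \<noteq> p \<longrightarrow> b' ! t = b ! t" and c2: "b' ! p = ?mv" using iff by blast+
        show ?thesis unfolding src.simps tgt.simps if_P[OF c1] ent1_F[OF k] cf using True c2 by simp
      next
        case False
        hence "\<not> ((\<forall>t<?r. t \<noteq> p \<longrightarrow> b' ! t = b ! t) \<and> b' ! p = ?mv)" using iff by blast
        thus ?thesis unfolding src.simps tgt.simps ent1_F[OF k] using False by auto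
      qed
    qed
  qed (use g in auto)
qed

lemma act_dl_EF:
  assumes b: "b \<in> TB eps ls" and k: "2 \<le> length eps" and g: "isEF (length eps) g"
  shows "act eps xs ls g (dl b) b' =
    (\<Sum>p<length ls. if 0 < (b ! p) (src (length eps) g)
        \<and> mvt (src (length eps) g) (tgt (length eps) g) (b ! p) \<in> basisW eps (ls ! p)
        \<and> b' = b[p := mvt (src (length eps) g) (tgt (length eps) g) (b ! p)]
      then cf eps xs ls g p b else 0)"
proof (cases "b' \<in> TB eps ls")
  case False
  have "(if 0 < (b ! p) (src (length eps) g)
      \<and> mvt (src (length eps) g) (tgt (length eps) g) (b ! p) \<in> basisW eps (ls ! p)
      \<and> b' = b[p := mvt (src (length eps) g) (tgt (length eps) g) (b ! p)]
    then cf eps xs ls g p b else 0) = 0" if "p < length ls" for p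
    using False TB_upd[OF b that] by auto
  thus ?thesis using False act_dl_gen[OF b] by simp
next
  case True
  thus ?thesis using act_dl_gen[OF b] entT_EF[OF b True k g] by simp
qed

lemma sum_upd_nat: "finite A \<Longrightarrow> a \<in> A \<Longrightarrow> sum (f(a := x)) A + f a = sum f A + (x::nat)"
proof -
  assume A: "finite A" "a \<in> A"
  have "sum (f(a := x)) A = x + sum (f(a := x)) (A - {a})" using A by (simp add: sum.remove)
  also have "sum (f(a := x)) (A - {a}) = sum f (A - {a})" by (intro sum.cong) auto
  finally show ?thesis using A by (simp add: sum.remove)
qed

lemma mvt_basisW:
  assumes m: "m \<in> basisW eps n" and s: "0 < m s" and st: "s \<noteq> t" and t: "t \<in> {1..length eps}"
    and t1: "eps ! (t - 1) = 1 \<Longrightarrow> m t = 0"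
  shows "mvt s t m \<in> basisW eps n"
proof -
  have sin: "s \<in> {1..length eps}" using m s by (auto simp: basisW_def)
  let ?A = "{1..length eps}"
  have "sum (m(s := m s - 1)) ?A + m s = sum m ?A + (m s - 1)" by (rule sum_upd_nat) (use sin in auto)
  hence e1: "sum (m(s := m s - 1)) ?A + 1 = sum m ?A" using s by simp
  have "sum ((m(s := m s - 1))(t := m t + 1)) ?A + (m(s := m s - 1)) t = sum (m(s := m s - 1)) ?A + (m t + 1)"
    by (rule sum_upd_nat) (use t in auto)
  hence "sum (mvt s t m) ?A = sum m ?A" using e1 st by (simp add: mvt_def)
  thus ?thesis using m sin t t1 st by (auto simp: basisW_def mvt_def)
qed

lemma mvt_apply: "s \<noteq> t \<Longrightarrow> mvt s t m c = (if c = s then m s - 1 else if c = t then m t + 1 else m c)"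
  by (simp add: mvt_def)

lemma act_sum:
  assumes "finite P"
  shows "act eps xs ls g (\<lambda>b. \<Sum>q\<in>P. c q * f q b) = (\<lambda>b'. \<Sum>q\<in>P. c q * act eps xs ls g (f q) b')"
  unfolding act_def using assms
  by (auto simp: sum_distrib_left sum_distrib_right mult.assoc mult.left_commute intro!: ext sum.swap)

lemma act_scal: "act eps xs ls g (\<lambda>b. c * f b) = (\<lambda>b'. c * act eps xs ls g f b')"
  using act_sum[where P="{0::nat}" and c="\<lambda>_. c" and f="\<lambda>_. f"] by simp

lemma act_lin: "act eps xs ls g v = (\<lambda>b'. \<Sum>b\<in>TB eps ls. v b * act eps xs ls g (dl b) b')"
proof
  fix b'
  have "act eps xs ls g (dl b) b' = (if b' \<in> TB eps ls then entT eps xs ls g b' b else 0)" if "b \<in> TB eps ls" for b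
    using act_dl_gen[OF that] .
  thus "act eps xs ls g v b' = (\<Sum>b\<in>TB eps ls. v b * act eps xs ls g (dl b) b')"
    by (simp add: act_def mult.commute)
qed

definition chain :: "nat list \<Rightarrow> K list \<Rightarrow> nat list \<Rightarrow> gen list \<Rightarrow> ((nat \<Rightarrow> nat) list \<Rightarrow> K) \<Rightarrow> ((nat \<Rightarrow> nat) list \<Rightarrow> K)" where
  "chain eps xs ls gs v = fold (act eps xs ls) gs v"

lemma chain_Nil[simp]: "chain eps xs ls [] v = v" by (simp add: chain_def)
lemma chain_Cons[simp]: "chain eps xs ls (g # gs) v = chain eps xs ls gs (act eps xs ls g v)"
  by (simp add: chain_def)

lemma chain_sum:
  "finite P \<Longrightarrow> chain eps xs ls gs (\<lambda>b. \<Sum>q\<in>P. c q * f q b) = (\<lambda>b'. \<Sum>q\<in>P. c q * chain eps xs ls gs (f q) b')"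
proof (induction gs arbitrary: f)
  case Nil thus ?case by simp
next
  case (Cons g gs)
  show ?case using Cons.IH[of "\<lambda>q. act eps xs ls g (f q)"] Cons.prems by (simp add: act_sum)
qed

lemma chain_scal: "chain eps xs ls gs (\<lambda>b. c * f b) = (\<lambda>b'. c * chain eps xs ls gs f b')"
  using chain_sum[where P="{0::nat}" and c="\<lambda>_. c" and f="\<lambda>_. f"] by simp

fun ok :: "nat \<Rightarrow> nat \<Rightarrow> gen list \<Rightarrow> bool" where
  "ok k c [] = True"
| "ok k c (g # gs) = (isEF k g \<and> src k g = c \<and> ok k (tgt k g) gs)"
fun endp :: "nat \<Rightarrow> nat \<Rightarrow> gen list \<Rightarrow> nat" where
  "endp k c [] = c"
| "endp k c (g # gs) = endp k (tgt k g) gs"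
fun vis :: "nat \<Rightarrow> nat \<Rightarrow> gen list \<Rightarrow> nat list" where
  "vis k c [] = []"
| "vis k c (g # gs) = tgt k g # vis k (tgt k g) gs"

lemma ok_append: "ok k c (xs @ ys) = (ok k c xs \<and> ok k (endp k c xs) ys)"
  by (induction xs arbitrary: c) auto
lemma endp_append: "endp k c (xs @ ys) = endp k (endp k c xs) ys"
  by (induction xs arbitrary: c) auto
lemma vis_append: "vis k c (xs @ ys) = vis k c xs @ vis k (endp k c xs) ys"
  by (induction xs arbitrary: c) auto

lemma src_tgt_range:
  assumes "isEF k g" "2 \<le> k"
  shows "src k g \<in> {1..k}" "tgt k g \<in> {1..k}" "src k g \<noteq> tgt k g"
  using assms by (cases g; auto simp: ia_def)+

lemma side_sub: "isEF k g \<Longrightarrow> p < r \<Longrightarrow> side r g p \<subseteq> {..<r} - {p}"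
  by (cases g) auto

locale ctx =
  fixes eps :: "nat list" and xs :: "K list" and ls :: "nat list"
  assumes k2: "2 \<le> length eps" and eps01: "set eps \<subseteq> {0, 1}"
    and lxs: "length xs = length ls" and xnz: "\<forall>x\<in>set xs. x \<noteq> 0"
begin

abbreviation "k \<equiv> length eps"
abbreviation "r \<equiv> length ls"
definition one :: "nat \<Rightarrow> bool" where "one c \<longleftrightarrow> c \<in> {1..k} \<and> eps ! (c - 1) = 1"
definition zero :: "nat \<Rightarrow> bool" where "zero c \<longleftrightarrow> c \<in> {1..k} \<and> eps ! (c - 1) = 0"

lemma one_zero: "c \<in> {1..k} \<Longrightarrow> one c \<or> zero c"
proof -
  assume c: "c \<in> {1..k}"
  hence "eps ! (c - 1) \<in> set eps" by auto
  thus ?thesis using eps01 c by (auto simp: one_def zero_def)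
qed

lemma zero_not_one: "zero c \<Longrightarrow> \<not> one c"
  by (simp add: one_def zero_def)

lemma hh_0: "m c = 0 \<Longrightarrow> hh eps m c = 1"
  by (simp add: hh_def)

lemma hh_nz: "hh eps m c \<noteq> 0"
  by (simp add: hh_def)

lemma xs_nz: "p < r \<Longrightarrow> xs ! p \<noteq> 0"
  using xnz lxs by auto

lemma Xf_nz: "p < r \<Longrightarrow> Xf g (xs ! p) \<noteq> 0"
  using xs_nz by (cases g) auto

lemma prod_nz: "(\<And>u. f u \<noteq> (0::K)) \<Longrightarrow> prod f A \<noteq> 0"
  by (cases "finite A") (auto simp: prod_zero_iff)

lemma cf_nz: "p < r \<Longrightarrow> 0 < (b ! p) (src k g) \<Longrightarrow> cf eps xs ls g p b \<noteq> 0"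
  unfolding cf_def Let_def using hh_nz Xf_nz qint_nz prod_nz[of "\<lambda>u. hh eps (b ! u) (src k g) / hh eps (b ! u) (tgt k g)"]
  by (simp add: power_int_eq_0_iff)

lemma basisW_one: "m \<in> basisW eps n \<Longrightarrow> one c \<Longrightarrow> m c \<le> 1"
  by (auto simp: basisW_def one_def)

lemma basisW_supp: "m \<in> basisW eps n \<Longrightarrow> 0 < m c \<Longrightarrow> c \<in> {1..k}"
  by (auto simp: basisW_def)

lemma tail:
  assumes "ok k c gs" "gs \<noteq> []" "\<forall>c'\<in>set (butlast (vis k c gs)). one c'" "endp k c gs = d" "zero d"
    "b \<in> TB eps ls" "p < r" "one c" "(b ! p) c = 1"
    "\<forall>t<r. \<forall>c'. one c' \<and> (t \<noteq> p \<or> c' \<noteq> c) \<longrightarrow> (b ! t) c' = 0"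
    "\<forall>g\<in>set gs. side r g p = S"
  shows "chain eps xs ls gs (dl b) = (\<lambda>b'. ((\<Prod>g\<leftarrow>gs. Xf g (xs ! p)) * (\<Prod>u\<in>S. inverse (hh eps (b ! u) d))
      * qq powi (- int ((b ! p) d))) * dl (b[p := (b ! p)(c := 0, d := (b ! p) d + 1)]) b')"
  using assms
proof (induction gs arbitrary: c b)
  case Nil thus ?case by simp
next
  case (Cons g gs)
  let ?t = "tgt k g"
  have g: "isEF k g" and sc: "src k g = c" and okr: "ok k ?t gs" using Cons.prems by auto
  have t1k: "?t \<in> {1..k}" and ct: "c \<noteq> ?t" using src_tgt_range[OF g k2] sc by auto
  have lb: "length b = r" using Cons.prems(6) TB_len by blast
  have bp: "b ! p \<in> basisW eps (ls ! p)" using Cons.prems(6,7) by (simp add: TB_def)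
  have cd: "c \<noteq> d" using Cons.prems(5,8) zero_not_one by blast
  have Ssub: "S \<subseteq> {..<r} - {p}" using side_sub[OF g Cons.prems(7)] Cons.prems(11) by auto
  have onlyp: "0 < (b ! p') c \<longleftrightarrow> p' = p" if "p' < r" for p'
    using Cons.prems(9,10,8) that by (cases "p' = p") auto
  have tfree: "one ?t \<Longrightarrow> (b ! p) ?t = 0" using Cons.prems(10,7) ct by blast
  have mvB: "mvt c ?t (b ! p) \<in> basisW eps (ls ! p)"
    by (rule mvt_basisW[OF bp]) (use Cons.prems(9) ct t1k tfree in \<open>auto simp: one_def\<close>)
  have step: "act eps xs ls g (dl b) = (\<lambda>b'. cf eps xs ls g p b * dl (b[p := mvt c ?t (b ! p)]) b')"
  proof
    fix b'
    have "act eps xs ls g (dl b) b' = (\<Sum>p'<r. if 0 < (b ! p') c \<and> mvt c ?t (b ! p') \<in> basisW eps (ls ! p')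
        \<and> b' = b[p' := mvt c ?t (b ! p')] then cf eps xs ls g p' b else 0)"
      using act_dl_EF[OF Cons.prems(6) k2 g] sc by simp
    also have "\<dots> = (\<Sum>p'<r. if p' = p then (if b' = b[p := mvt c ?t (b ! p)] then cf eps xs ls g p b else 0) else 0)"
      by (intro sum.cong refl) (use onlyp mvB in auto)
    also have "\<dots> = cf eps xs ls g p b * dl (b[p := mvt c ?t (b ! p)]) b'"
      using Cons.prems(7) by (simp add: dl_def)
    finally show "act eps xs ls g (dl b) b' = cf eps xs ls g p b * dl (b[p := mvt c ?t (b ! p)]) b'" .
  qed
  have hc: "hh eps (b ! u) c = 1" if "u \<in> S" for u
    using Cons.prems(10,8) Ssub that by (intro hh_0) auto
  show ?case
  proof (cases "gs = []")
    case True
    hence td: "?t = d" using Cons.prems(4) by simp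
    have cfv: "cf eps xs ls g p b = Xf g (xs ! p) * (\<Prod>u\<in>S. inverse (hh eps (b ! u) d)) * qq powi (- int ((b ! p) d))"
      unfolding cf_def Let_def sc td using Cons.prems(9,11) hc td
      by (simp add: divide_inverse mult.commute mult.left_commute)
    have mv: "mvt c ?t (b ! p) = (b ! p)(c := 0, d := (b ! p) d + 1)"
      using Cons.prems(9) td by (simp add: mvt_def)
    show ?thesis unfolding True chain_Cons chain_Nil step mv cfv by (simp only: mult.assoc list.map prod_list.Cons prod_list.Nil mult_1_right)
  next
    case False
    have tone: "one ?t" using Cons.prems(3) False by (cases gs) auto
    let ?b1 = "b[p := mvt c ?t (b ! p)]"
    have b1: "?b1 \<in> TB eps ls" using TB_upd[OF Cons.prems(6,7) mvB] .
    have b1p: "?b1 ! p = mvt c ?t (b ! p)" using lb Cons.prems(7) by simp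
    have b1u: "?b1 ! u = b ! u" if "u \<noteq> p" for u using that by simp
    have td: "?t \<noteq> d" using tone Cons.prems(5) zero_not_one by blast
    have IH: "chain eps xs ls gs (dl ?b1) = (\<lambda>b'. ((\<Prod>g\<leftarrow>gs. Xf g (xs ! p)) * (\<Prod>u\<in>S. inverse (hh eps (?b1 ! u) d))
      * qq powi (- int ((?b1 ! p) d))) * dl (?b1[p := (?b1 ! p)(?t := 0, d := (?b1 ! p) d + 1)]) b')"
    proof (rule Cons.IH[OF okr False])
      show "\<forall>c'\<in>set (butlast (vis k ?t gs)). one c'" using Cons.prems(3) False by (cases gs) auto
      show "endp k ?t gs = d" using Cons.prems(4) by simp
      show "(?b1 ! p) ?t = 1" using b1p tfree tone ct by (simp add: mvt_def)
      show "\<forall>t<r. \<forall>c'. one c' \<and> (t \<noteq> p \<or> c' \<noteq> ?t) \<longrightarrow> (?b1 ! t) c' = 0"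
      proof (intro allI impI)
        fix t c' assume "t < r" "one c' \<and> (t \<noteq> p \<or> c' \<noteq> ?t)"
        thus "(?b1 ! t) c' = 0" using Cons.prems(10,9) b1p ct
          by (cases "t = p") (auto simp: mvt_def)
      qed
      show "\<forall>g\<in>set gs. side r g p = S" using Cons.prems(11) by simp
    qed (use Cons.prems tone b1 in auto)
    have e1: "(\<Prod>u\<in>S. inverse (hh eps (?b1 ! u) d)) = (\<Prod>u\<in>S. inverse (hh eps (b ! u) d))"
    proof (intro prod.cong refl)
      fix u assume "u \<in> S" hence "u \<noteq> p" using Ssub by blast
      thus "inverse (hh eps (?b1 ! u) d) = inverse (hh eps (b ! u) d)" by simp
    qed
    have e2: "(?b1 ! p) d = (b ! p) d" using b1p cd td by (simp add: mvt_def)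
    have e3: "?b1[p := (?b1 ! p)(?t := 0, d := (?b1 ! p) d + 1)] = b[p := (b ! p)(c := 0, d := (b ! p) d + 1)]"
    proof -
      have "(mvt c ?t (b!p))(?t := 0, d := (b!p) d + 1) = (b!p)(c := 0, d := (b!p) d + 1)"
        using tfree tone Cons.prems(9) cd td ct by (auto simp: mvt_def fun_eq_iff)
      moreover have e2': "mvt c ?t (b ! p) d = (b ! p) d" using e2 b1p by simp
      ultimately show ?thesis unfolding b1p list_update_overwrite e2' by simp
    qed
    have tz: "(b ! p) ?t = 0" using tfree tone by blast
    have cfv: "cf eps xs ls g p b = Xf g (xs ! p)"
    proof -
      have "hh eps (b ! u) ?t = 1" if "u \<in> S" for u
      proof -
        have "u < r" "u \<noteq> p" using Ssub that by auto
        thus ?thesis using Cons.prems(10) tone by (intro hh_0) auto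
      qed
      moreover have "side r g p = S" using Cons.prems(11) by simp
      ultimately show ?thesis unfolding cf_def Let_def sc using hc Cons.prems(9) tz by simp
    qed
    show ?thesis
      apply (unfold chain_Cons step chain_scal IH)
      apply (unfold e1 e3)
      apply (unfold e2 cfv)
      by (simp only: mult.assoc prod_list.Cons list.map)
  qed
qed

end

context ctx begin

lemma full:
  assumes okg: "ok k s gs" and ne: "gs \<noteq> []" and vi: "\<forall>c'\<in>set (butlast (vis k s gs)). one c'"
    and en: "endp k s gs = d" and zs: "zero s" and zd: "zero d" and sd: "s \<noteq> d"
    and b: "b \<in> TB eps ls" and v0: "\<forall>t<r. \<forall>c'. one c' \<longrightarrow> (b ! t) c' = 0"
    and sS: "\<forall>g\<in>set gs. \<forall>p. side r g p = S p"
  shows "chain eps xs ls gs (dl b) = (\<lambda>b'. \<Sum>p<r. if 0 < (b ! p) s \<and> b' = b[p := mvt s d (b ! p)]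
     then (\<Prod>u\<in>S p. hh eps (b ! u) s / hh eps (b ! u) d) * (\<Prod>g\<leftarrow>gs. Xf g (xs ! p))
        * qq powi (int ((b ! p) s) - int ((b ! p) d) - 1) * qint (int ((b ! p) s)) else 0)"
proof -
  obtain g gs' where gs: "gs = g # gs'" using ne by (cases gs) auto
  let ?t = "tgt k g"
  have g: "isEF k g" and sc: "src k g = s" and okr: "ok k ?t gs'" using okg gs by auto
  have t1k: "?t \<in> {1..k}" and st: "s \<noteq> ?t" using src_tgt_range[OF g k2] sc by auto
  have lb: "length b = r" using b TB_len by blast
  have Ssub: "S p \<subseteq> {..<r} - {p}" if "p < r" for p using side_sub[OF g that] sS gs by auto
  have tfree: "one ?t \<Longrightarrow> (b ! p) ?t = 0" if "p < r" for p using v0 that by blast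
  have mvB: "mvt s ?t (b ! p) \<in> basisW eps (ls ! p)" if "p < r" "0 < (b ! p) s" for p
  proof (rule mvt_basisW)
    show "b ! p \<in> basisW eps (ls ! p)" using b that by (simp add: TB_def)
    show "eps ! (?t - 1) = 1 \<Longrightarrow> (b ! p) ?t = 0" using tfree[OF that(1)] t1k by (simp add: one_def)
  qed (use that st t1k in auto)
  let ?c = "\<lambda>p. if 0 < (b ! p) s then cf eps xs ls g p b else 0"
  have step: "act eps xs ls g (dl b) = (\<lambda>b'. \<Sum>p<r. ?c p * dl (b[p := mvt s ?t (b ! p)]) b')"
  proof
    fix b'
    show "act eps xs ls g (dl b) b' = (\<Sum>p<r. ?c p * dl (b[p := mvt s ?t (b ! p)]) b')"
      unfolding act_dl_EF[OF b k2 g] sc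
      by (intro sum.cong refl) (use mvB in \<open>auto simp: dl_def\<close>)
  qed
  have hsd: "hh eps (b ! u) ?t = 1" if "one ?t" "u < r" for u using v0 that by (intro hh_0) auto
  show ?thesis
  proof (cases "gs' = []")
    case True
    hence td: "?t = d" using en gs by simp
    show ?thesis unfolding gs True chain_Cons chain_Nil step
    proof (rule ext, intro sum.cong refl)
      fix b' p assume "p \<in> {..<r}"
      have "S p = side r g p" using sS gs by simp
      thus "?c p * dl (b[p := mvt s ?t (b ! p)]) b' = (if 0 < (b ! p) s \<and> b' = b[p := mvt s d (b ! p)]
       then (\<Prod>u\<in>S p. hh eps (b ! u) s / hh eps (b ! u) d) * (\<Prod>g\<leftarrow>[g]. Xf g (xs ! p))
        * qq powi (int ((b ! p) s) - int ((b ! p) d) - 1) * qint (int ((b ! p) s)) else 0)"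
        unfolding td cf_def Let_def sc by (simp add: dl_def mult.assoc)
    qed
  next
    case False
    have tone: "one ?t" using vi False gs by (cases gs') auto
    have td: "?t \<noteq> d" using tone zd zero_not_one by blast
    have trm: "chain eps xs ls gs' (dl (b[p := mvt s ?t (b ! p)])) = (\<lambda>b'.
        ((\<Prod>g\<leftarrow>gs'. Xf g (xs ! p)) * (\<Prod>u\<in>S p. inverse (hh eps (b ! u) d)) * qq powi (- int ((b ! p) d)))
        * dl (b[p := mvt s d (b ! p)]) b')" if p: "p < r" and bs: "0 < (b ! p) s" for p
    proof -
      let ?b1 = "b[p := mvt s ?t (b ! p)]"
      have b1: "?b1 \<in> TB eps ls" using TB_upd[OF b p mvB[OF p bs]] .
      have b1p: "?b1 ! p = mvt s ?t (b ! p)" using lb p by simp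
      have tz: "(b ! p) ?t = 0" using tfree[OF p] tone by blast
      have T: "chain eps xs ls gs' (dl ?b1) = (\<lambda>b'. ((\<Prod>g\<leftarrow>gs'. Xf g (xs ! p)) * (\<Prod>u\<in>S p. inverse (hh eps (?b1 ! u) d))
          * qq powi (- int ((?b1 ! p) d))) * dl (?b1[p := (?b1 ! p)(?t := 0, d := (?b1 ! p) d + 1)]) b')"
      proof (rule tail[OF okr False])
        show "\<forall>c'\<in>set (butlast (vis k ?t gs')). one c'" using vi False gs by (cases gs') auto
        show "endp k ?t gs' = d" using en gs by simp
        show "(?b1 ! p) ?t = 1" using b1p tz st by (simp add: mvt_def)
        show "\<forall>t<r. \<forall>c'. one c' \<and> (t \<noteq> p \<or> c' \<noteq> ?t) \<longrightarrow> (?b1 ! t) c' = 0"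
        proof (intro allI impI)
          fix t c' assume "t < r" "one c' \<and> (t \<noteq> p \<or> c' \<noteq> ?t)"
          moreover have "c' \<noteq> s" if "one c'" using that zs zero_not_one by blast
          ultimately show "(?b1 ! t) c' = 0" using v0 b1p st
            by (cases "t = p") (auto simp: mvt_def)
        qed
        show "\<forall>g\<in>set gs'. side r g p = S p" using sS gs by simp
      qed (use zd b1 p tone in auto)
      have e1: "(\<Prod>u\<in>S p. inverse (hh eps (?b1 ! u) d)) = (\<Prod>u\<in>S p. inverse (hh eps (b ! u) d))"
      proof (intro prod.cong refl)
        fix u assume "u \<in> S p" hence "u \<noteq> p" using Ssub[OF p] by blast
        thus "inverse (hh eps (?b1 ! u) d) = inverse (hh eps (b ! u) d)" by simp
      qed
      have e2': "mvt s ?t (b ! p) d = (b ! p) d" using sd td by (simp add: mvt_def)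
      have e3: "?b1[p := (?b1 ! p)(?t := 0, d := (?b1 ! p) d + 1)] = b[p := mvt s d (b ! p)]"
      proof -
        have "(mvt s ?t (b!p))(?t := 0, d := (b!p) d + 1) = mvt s d (b!p)"
          using tz sd td st by (auto simp: mvt_def fun_eq_iff)
        thus ?thesis unfolding b1p list_update_overwrite e2' by simp
      qed
      show ?thesis
        apply (unfold T)
        apply (unfold e1 e3)
        apply (unfold b1p e2')
        by (rule refl)
    qed
    show ?thesis
    proof -
      have "chain eps xs ls gs (dl b) = chain eps xs ls gs' (\<lambda>b'. \<Sum>p<r. ?c p * dl (b[p := mvt s ?t (b ! p)]) b')"
        unfolding gs chain_Cons step by (rule refl)
      also have "\<dots> = (\<lambda>b'. \<Sum>p<r. ?c p * chain eps xs ls gs' (dl (b[p := mvt s ?t (b ! p)])) b')"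
        by (rule chain_sum) simp
      also have "\<dots> = (\<lambda>b'. \<Sum>p<r. if 0 < (b ! p) s \<and> b' = b[p := mvt s d (b ! p)]
         then (\<Prod>u\<in>S p. hh eps (b ! u) s / hh eps (b ! u) d) * (\<Prod>g\<leftarrow>g # gs'. Xf g (xs ! p))
          * qq powi (int ((b ! p) s) - int ((b ! p) d) - 1) * qint (int ((b ! p) s)) else 0)"
      proof (rule ext, intro sum.cong refl)
        fix b' p assume p: "p \<in> {..<r}"
        show "?c p * chain eps xs ls gs' (dl (b[p := mvt s ?t (b ! p)])) b' = (if 0 < (b ! p) s \<and> b' = b[p := mvt s d (b ! p)]
         then (\<Prod>u\<in>S p. hh eps (b ! u) s / hh eps (b ! u) d) * (\<Prod>g\<leftarrow>g # gs'. Xf g (xs ! p))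
          * qq powi (int ((b ! p) s) - int ((b ! p) d) - 1) * qint (int ((b ! p) s)) else 0)"
        proof (cases "0 < (b ! p) s")
          case False thus ?thesis by simp
        next
          case True
          have pr: "p < r" using p by simp
          have sp: "side r g p = S p" using sS gs by simp
          have h1: "(\<Prod>u\<in>S p. hh eps (b ! u) s / hh eps (b ! u) ?t) = (\<Prod>u\<in>S p. hh eps (b ! u) s)"
            using hsd[OF tone] Ssub[OF pr] by (intro prod.cong refl) auto
          have cfv: "cf eps xs ls g p b = (\<Prod>u\<in>S p. hh eps (b ! u) s) * (Xf g (xs ! p) * qq powi (int ((b ! p) s) - 1) * qint (int ((b ! p) s)))"
            unfolding cf_def Let_def sc sp h1 using tfree[OF pr tone] by simp
          have pw: "qq powi (int ((b ! p) s) - int ((b ! p) d) - 1) = qq powi (int ((b ! p) s) - 1) * qq powi (- int ((b ! p) d))"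
            by (simp add: power_int_add[symmetric] algebra_simps)
          have dv: "(\<Prod>u\<in>S p. hh eps (b ! u) s / hh eps (b ! u) d) = (\<Prod>u\<in>S p. hh eps (b ! u) s) * (\<Prod>u\<in>S p. inverse (hh eps (b ! u) d))"
            by (simp add: divide_inverse prod.distrib)
          show ?thesis unfolding trm[OF pr True] cfv pw dv using True by (simp add: dl_def mult_ac)
        qed
      qed
      finally show ?thesis unfolding gs .
    qed
  qed
qed

end

definition FF :: "(nat \<Rightarrow> nat) \<Rightarrow> nat \<Rightarrow> nat" where "FF n x = (\<Sum>c\<in>{1..x}. n c)"
definition DD :: "(nat \<Rightarrow> nat) \<Rightarrow> (nat \<Rightarrow> nat) \<Rightarrow> nat \<Rightarrow> int" where
  "DD n n0 x = int (FF n x) - int (FF n0 x)"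
definition Phi :: "nat \<Rightarrow> (nat \<Rightarrow> nat) \<Rightarrow> (nat \<Rightarrow> nat) \<Rightarrow> nat" where
  "Phi k n n0 = (\<Sum>x\<in>{1..k}. nat \<bar>DD n n0 x\<bar>)"

lemma FF_0[simp]: "FF n 0 = 0" by (simp add: FF_def)
lemma FF_Suc: "FF n (Suc x) = FF n x + n (Suc x)" by (simp add: FF_def)
lemma DD_0[simp]: "DD n n0 0 = 0" by (simp add: DD_def)
lemma DD_Suc: "DD n n0 (Suc x) = DD n n0 x + int (n (Suc x)) - int (n0 (Suc x))"
  by (simp add: DD_def FF_Suc)

lemma FF_mvt_left:
  assumes "n (Suc t) \<ge> 1" "0 < t"
  shows "FF (mvt (Suc t) t n) x = FF n x + (if x = t then 1 else 0)"
proof (induction x)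
  case 0 thus ?case using assms by simp
next
  case (Suc x)
  show ?case using Suc assms by (cases t) (auto simp: FF_Suc mvt_def)
qed

lemma FF_mvt_right:
  assumes "n s \<ge> 1" "s \<ge> 1"
  shows "FF (mvt s (Suc s) n) x + (if x = s then 1 else 0) = FF n x"
proof (induction x)
  case 0 thus ?case using assms by simp
next
  case (Suc x)
  show ?case using Suc assms by (auto simp: FF_Suc mvt_def)
qed

lemma sum_change_one:
  assumes "finite A" "x0 \<in> A" "\<And>x. x \<in> A \<Longrightarrow> x \<noteq> x0 \<Longrightarrow> f x = g x" "f x0 + 1 = (g x0 :: nat)"
  shows "sum f A < sum g A"
proof -
  have "sum f A = f x0 + sum f (A - {x0})" using assms by (simp add: sum.remove)
  moreover have "sum g A = g x0 + sum g (A - {x0})" using assms by (simp add: sum.remove)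
  moreover have "sum f (A - {x0}) = sum g (A - {x0})" using assms by (intro sum.cong) auto
  ultimately show ?thesis using assms by simp
qed

lemma descent_left:
  assumes n01: "\<forall>c. n0 c \<le> 1"
  shows "1 \<le> y \<Longrightarrow> DD n n0 y < 0 \<Longrightarrow> n (Suc y) \<ge> 1 \<Longrightarrow>
     \<exists>x'. 1 \<le> x' \<and> x' \<le> y \<and> DD n n0 x' < 0 \<and> n x' = 0 \<and> n (Suc x') \<ge> 1"
proof (induction y)
  case 0 thus ?case by simp
next
  case (Suc y)
  show ?case
  proof (cases "n (Suc y) = 0")
    case True thus ?thesis using Suc.prems by auto
  next
    case False
    have "DD n n0 (Suc y) = DD n n0 y + int (n (Suc y)) - int (n0 (Suc y))" by (rule DD_Suc)
    moreover have "n0 (Suc y) \<le> 1" using n01 by blast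
    ultimately have dy: "DD n n0 y < 0" using False Suc.prems(2) by linarith
    hence "1 \<le> y" by (cases y) auto
    then obtain x' where "1 \<le> x' \<and> x' \<le> y \<and> DD n n0 x' < 0 \<and> n x' = 0 \<and> n (Suc x') \<ge> 1"
      using Suc.IH dy False by auto
    thus ?thesis by (intro exI[of _ x']) auto
  qed
qed

lemma ascent_right:
  assumes n01: "\<forall>c. n0 c \<le> 1" and Dk: "DD n n0 k = 0"
  shows "y \<le> k \<Longrightarrow> 1 \<le> y \<Longrightarrow> DD n n0 y > 0 \<Longrightarrow> n y \<ge> 1 \<Longrightarrow>
     \<exists>x'. y \<le> x' \<and> x' < k \<and> 1 \<le> x' \<and> DD n n0 x' > 0 \<and> n x' \<ge> 1 \<and> n (Suc x') = 0"
proof (induction "k - y" arbitrary: y)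
  case 0 thus ?case using Dk by auto
next
  case (Suc j)
  have yk: "y < k" using Suc.prems Dk by (cases "y = k") auto
  show ?case
  proof (cases "n (Suc y) = 0")
    case True thus ?thesis using Suc.prems yk by auto
  next
    case False
    have "DD n n0 (Suc y) = DD n n0 y + int (n (Suc y)) - int (n0 (Suc y))" by (rule DD_Suc)
    moreover have "n0 (Suc y) \<le> 1" using n01 by blast
    ultimately have dy: "DD n n0 (Suc y) > 0" using False Suc.prems(3) by linarith
    have jj: "j = k - Suc y" using Suc.hyps(2) by simp
    obtain x' where "Suc y \<le> x' \<and> x' < k \<and> 1 \<le> x' \<and> DD n n0 x' > 0 \<and> n x' \<ge> 1 \<and> n (Suc x') = 0"
      using Suc.hyps(1)[OF jj] yk dy False by (auto simp: Suc_le_eq)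
    thus ?thesis by (intro exI[of _ x']) auto
  qed
qed

lemma comb_move:
  assumes n01: "\<forall>c. n0 c \<le> 1" and Fk: "FF n k = FF n0 k" and ne: "\<exists>c\<in>{1..k}. n c \<noteq> n0 c"
  shows "\<exists>s t. s \<in> {1..k} \<and> t \<in> {1..k} \<and> (t = Suc s \<or> s = Suc t) \<and> n s \<ge> 1 \<and> n t = 0
     \<and> Phi k (mvt s t n) n0 < Phi k n n0"
proof -
  have Dk: "DD n n0 k = 0" using Fk by (simp add: DD_def)
  have "\<exists>x\<in>{1..k}. DD n n0 x \<noteq> 0"
  proof (rule ccontr)
    assume "\<not> ?thesis"
    hence z: "\<forall>x\<in>{1..k}. DD n n0 x = 0" by auto
    obtain c where c: "c \<in> {1..k}" "n c \<noteq> n0 c" using ne by blast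
    then obtain c' where c': "c = Suc c'" by (cases c) auto
    have "DD n n0 c = DD n n0 c' + int (n c) - int (n0 c)" using c' DD_Suc by simp
    moreover have "DD n n0 c' = 0" using z c c' by (cases c') auto
    ultimately show False using z c by auto
  qed
  then obtain x where x: "x \<in> {1..k}" "DD n n0 x \<noteq> 0" by blast
  show ?thesis
  proof (cases "\<exists>x\<in>{1..k}. DD n n0 x < 0")
    case True
    let ?A = "{x\<in>{1..k}. DD n n0 x < 0}"
    define x0 where "x0 = Max ?A"
    have fA: "finite ?A" by simp
    have neA: "?A \<noteq> {}" using True by auto
    have x0A: "x0 \<in> ?A" unfolding x0_def using Max_in[OF fA neA] .
    have x0k: "x0 < k" using x0A Dk by (cases "x0 = k") auto
    have nx: "DD n n0 (Suc x0) \<ge> 0"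
    proof (rule ccontr)
      assume "\<not> ?thesis"
      hence "Suc x0 \<in> ?A" using x0k by auto
      hence "Suc x0 \<le> x0" unfolding x0_def using Max_ge[OF fA] by blast
      thus False by simp
    qed
    have "DD n n0 x0 < 0" using x0A by simp
    hence "n (Suc x0) \<ge> 1" using nx DD_Suc[of n n0 x0] by linarith
    then obtain x' where x': "1 \<le> x'" "x' \<le> x0" "DD n n0 x' < 0" "n x' = 0" "n (Suc x') \<ge> 1"
      using descent_left[OF n01, of x0 n] x0A by auto
    have x'pos: "0 < x'" using x'(1) by simp
    let ?m = "mvt (Suc x') x' n"
    have "Phi k ?m n0 < Phi k n n0" unfolding Phi_def
    proof (rule sum_change_one[of _ x'])
      show "x' \<in> {1..k}" using x' x0k by auto
      fix y assume "y \<in> {1..k}" "y \<noteq> x'"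
      thus "nat \<bar>DD ?m n0 y\<bar> = nat \<bar>DD n n0 y\<bar>" using FF_mvt_left[where n=n and t=x', OF x'(5) x'pos] by (simp add: DD_def)
    next
      show "nat \<bar>DD ?m n0 x'\<bar> + 1 = nat \<bar>DD n n0 x'\<bar>" using FF_mvt_left[where n=n and t=x' and x=x', OF x'(5) x'pos] x'(1,3)
        by (simp add: DD_def)
    qed simp
    thus ?thesis using x' x0k by (intro exI[of _ "Suc x'"] exI[of _ x']) auto
  next
    case False
    hence "\<not> DD n n0 x < 0" using x(1) by blast
    hence pos: "DD n n0 x > 0" using x(2) by linarith
    let ?A = "{x\<in>{1..k}. DD n n0 x > 0}"
    define x0 where "x0 = Min ?A"
    have fA: "finite ?A" by simp
    have neA: "?A \<noteq> {}" using pos x by auto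
    have x0A: "x0 \<in> ?A" unfolding x0_def using Min_in[OF fA neA] .
    obtain x1 where x1: "x0 = Suc x1" using x0A by (cases x0) auto
    have d1: "DD n n0 x1 \<le> 0"
    proof (cases x1)
      case 0 thus ?thesis by simp
    next
      case (Suc z)
      have "x1 \<notin> ?A"
      proof
        assume "x1 \<in> ?A" hence "x0 \<le> x1" unfolding x0_def using Min_le[OF fA] by blast
        thus False using x1 by simp
      qed
      thus ?thesis using Suc x0A x1 by auto
    qed
    have "n x0 \<ge> 1" using d1 x0A DD_Suc[of n n0 x1] x1 by auto
    then obtain x' where x': "x0 \<le> x'" "x' < k" "1 \<le> x'" "DD n n0 x' > 0" "n x' \<ge> 1" "n (Suc x') = 0"
      using ascent_right[OF n01 Dk, of x0] x0A by auto
    let ?m = "mvt x' (Suc x') n"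
    have "Phi k ?m n0 < Phi k n n0" unfolding Phi_def
    proof (rule sum_change_one[of _ x'])
      show "x' \<in> {1..k}" using x' by auto
      fix y assume "y \<in> {1..k}" "y \<noteq> x'"
      thus "nat \<bar>DD ?m n0 y\<bar> = nat \<bar>DD n n0 y\<bar>" using FF_mvt_right[where n=n and s=x' and x=y, OF x'(5,3)] by (simp add: DD_def)
    next
      show "nat \<bar>DD ?m n0 x'\<bar> + 1 = nat \<bar>DD n n0 x'\<bar>" using FF_mvt_right[where n=n and s=x' and x=x', OF x'(5,3)] x'(4)
        by (simp add: DD_def)
    qed simp
    thus ?thesis using x' by (intro exI[of _ x'] exI[of _ "Suc x'"]) auto
  qed
qed

definition wt :: "(nat \<Rightarrow> nat) list \<Rightarrow> nat \<Rightarrow> nat" where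
  "wt b c = (\<Sum>q<length b. (b ! q) c)"

lemma wt_upd:
  assumes p: "p < length b" and s: "0 < (b ! p) s" and st: "s \<noteq> t"
  shows "wt (b[p := mvt s t (b ! p)]) = mvt s t (wt b)"
proof
  fix c
  let ?R = "\<Sum>q\<in>{..<length b} - {p}. (b ! q) c"
  have "wt (b[p := mvt s t (b ! p)]) c = mvt s t (b ! p) c + (\<Sum>q\<in>{..<length b} - {p}. (b[p := mvt s t (b ! p)] ! q) c)"
    unfolding wt_def using p by (simp add: sum.remove)
  also have "(\<Sum>q\<in>{..<length b} - {p}. (b[p := mvt s t (b ! p)] ! q) c) = ?R"
    by (intro sum.cong) auto
  finally have e1: "wt (b[p := mvt s t (b ! p)]) c = mvt s t (b ! p) c + ?R" .
  have e2: "wt b c = (b ! p) c + ?R" unfolding wt_def using p by (simp add: sum.remove)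
  show "wt (b[p := mvt s t (b ! p)]) c = mvt s t (wt b) c"
    unfolding e1 mvt_apply[OF st] using e2 s by (auto simp: mvt_apply[OF st])
qed

lemma mvt_inj: "s \<noteq> t \<Longrightarrow> 0 < m s \<Longrightarrow> 0 < m' s \<Longrightarrow> mvt s t m = mvt s t m' \<Longrightarrow> m = m'"
proof (rule ext)
  fix c assume a: "s \<noteq> t" "0 < m s" "0 < m' s" "mvt s t m = mvt s t m'"
  have e: "mvt s t m c = mvt s t m' c" using a(4) by simp
  show "m c = m' c"
  proof (cases "c = s")
    case True
    have "m s - 1 = m' s - 1" using e True a(1) by (simp add: mvt_apply)
    thus ?thesis using True a(2,3) by simp
  next
    case False
    show ?thesis
    proof (cases "c = t")
      case True
      have "m t + 1 = m' t + 1" using e True a(1) by (simp add: mvt_apply)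
      thus ?thesis using True by simp
    next
      case False2: False
      show ?thesis using e False False2 a(1) by (simp add: mvt_apply)
    qed
  qed
qed

lemma mvt_back: "s \<noteq> t \<Longrightarrow> 0 < m s \<Longrightarrow> mvt t s (mvt s t m) = m"
  by (auto simp: fun_eq_iff mvt_apply)

definition mvgen :: "nat \<Rightarrow> nat \<Rightarrow> gen" where
  "mvgen s t = (if t = Suc s then F s else E t)"

lemma mvgen:
  assumes "s \<in> {1..k}" "t \<in> {1..k}" "t = Suc s \<or> s = Suc t"
  shows "isEF k (mvgen s t)" "src k (mvgen s t) = s" "tgt k (mvgen s t) = t" "valid_gen k (mvgen s t)"
  using assms by (auto simp: mvgen_def ia_def valid_gen_def)

context ctx begin

lemma sub_vecs: "submoduleT eps xs ls U \<Longrightarrow> u \<in> U \<Longrightarrow> u \<in> vecs eps ls"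
  by (auto simp: submoduleT_def)

lemma sub_act: "submoduleT eps xs ls U \<Longrightarrow> u \<in> U \<Longrightarrow> valid_gen k g \<Longrightarrow> act eps xs ls g u \<in> U"
  by (auto simp: submoduleT_def)

lemma sub_scal: "submoduleT eps xs ls U \<Longrightarrow> u \<in> U \<Longrightarrow> (\<lambda>b. c * u b) \<in> U"
  by (auto simp: submoduleT_def)

lemma sub_sum:
  assumes U: "submoduleT eps xs ls U" and P: "finite P"
  shows "(\<forall>q\<in>P. f q \<in> U) \<Longrightarrow> (\<lambda>b. \<Sum>q\<in>P. c q * f q b) \<in> U"
  using P
proof (induction P rule: finite_induct)
  case empty thus ?case using U by (simp add: submoduleT_def)
next
  case (insert x F)
  have a: "(\<lambda>b. c x * f x b) \<in> U" using insert.prems sub_scal[OF U] by auto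
  have b: "(\<lambda>b. \<Sum>q\<in>F. c q * f q b) \<in> U" using insert by auto
  have "(\<lambda>b. (c x * f x b) + (\<Sum>q\<in>F. c q * f q b)) \<in> U" using a b U by (simp add: submoduleT_def)
  thus ?case using insert.hyps by simp
qed

lemma sub_chain: "submoduleT eps xs ls U \<Longrightarrow> \<forall>g\<in>set gs. valid_gen k g \<Longrightarrow> u \<in> U \<Longrightarrow> chain eps xs ls gs u \<in> U"
  by (induction gs arbitrary: u) (auto intro: sub_act)

lemma vecs_decomp: "v \<in> vecs eps ls \<Longrightarrow> v = (\<lambda>b'. \<Sum>b\<in>TB eps ls. v b * dl b b')"
proof
  fix b' assume v: "v \<in> vecs eps ls"
  show "v b' = (\<Sum>b\<in>TB eps ls. v b * dl b b')"
  proof (cases "b' \<in> TB eps ls")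
    case True thus ?thesis using finite_TB by (simp add: dl_def if_distrib sum.delta' cong: if_cong)
  next
    case False
    hence "v b' = 0" using v by (simp add: vecs_def)
    moreover have "(\<Sum>b\<in>TB eps ls. v b * dl b b') = 0" using False by (intro sum.neutral) (auto simp: dl_def)
    ultimately show ?thesis by simp
  qed
qed

lemma all_dl: "submoduleT eps xs ls U \<Longrightarrow> \<forall>b\<in>TB eps ls. dl b \<in> U \<Longrightarrow> U = vecs eps ls"
proof
  assume U: "submoduleT eps xs ls U" and d: "\<forall>b\<in>TB eps ls. dl b \<in> U"
  show "U \<subseteq> vecs eps ls" using U by (simp add: submoduleT_def)
  show "vecs eps ls \<subseteq> U"
  proof
    fix v assume v: "v \<in> vecs eps ls"
    have "(\<lambda>b'. \<Sum>b\<in>TB eps ls. v b * dl b b') \<in> U" using sub_sum[OF U finite_TB] d by blast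
    thus "v \<in> U" using vecs_decomp[OF v] by simp
  qed
qed

lemma act_W: "v \<in> vecs eps ls \<Longrightarrow> act eps xs ls (W c) v = (\<lambda>b. qpar eps c ^ wt b c * v b)"
proof
  fix b assume v: "v \<in> vecs eps ls"
  show "act eps xs ls (W c) v b = qpar eps c ^ wt b c * v b"
  proof (cases "b \<in> TB eps ls")
    case True
    have lb: "length b = r" using True TB_len by blast
    have "(\<Sum>b'\<in>TB eps ls. entT eps xs ls (W c) b b' * v b') = (\<Sum>b'\<in>TB eps ls. if b' = b then (\<Prod>t<r. qpar eps c ^ (b ! t) c) * v b else 0)"
      by (intro sum.cong) (auto simp: entT_def)
    hence "act eps xs ls (W c) v b = (\<Prod>t<r. qpar eps c ^ (b ! t) c) * v b"
      using True finite_TB by (simp add: act_def sum.delta)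
    also have "(\<Prod>t<r. qpar eps c ^ (b ! t) c) = qpar eps c ^ wt b c"
      unfolding wt_def lb by (simp add: power_sum)
    finally show ?thesis .
  next
    case False thus ?thesis using v by (simp add: act_def vecs_def)
  qed
qed

lemma proj_diag:
  assumes U: "submoduleT eps xs ls U" and D: "\<And>v. v \<in> U \<Longrightarrow> (\<lambda>b. d b * v b) \<in> U"
  shows "u \<in> U \<Longrightarrow> (\<lambda>b. if d b = \<mu> then u b else 0) \<in> U"
proof (induction "card (d ` {b. u b \<noteq> 0} - {\<mu>})" arbitrary: u rule: less_induct)
  case (less u)
  have fin: "finite {b. u b \<noteq> 0}"
    using sub_vecs[OF U less.prems] finite_TB by (rule_tac finite_subset[of _ "TB eps ls"]) (auto simp: vecs_def)
  show ?case
  proof (cases "d ` {b. u b \<noteq> 0} - {\<mu>} = {}")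
    case True
    hence "(\<lambda>b. if d b = \<mu> then u b else 0) = u" by (auto simp: fun_eq_iff)
    thus ?thesis using less.prems by simp
  next
    case False
    then obtain lam where l: "lam \<in> d ` {b. u b \<noteq> 0}" "lam \<noteq> \<mu>" by blast
    define u' where "u' = (\<lambda>b. inverse (\<mu> - lam) * (d b * u b) + (inverse (\<mu> - lam) * - lam) * u b)"
    have u'U: "u' \<in> U"
    proof -
      have a1: "(\<lambda>b. inverse (\<mu> - lam) * (d b * u b)) \<in> U" using D[OF less.prems] sub_scal[OF U] by blast
      have a2: "(\<lambda>b. (inverse (\<mu> - lam) * - lam) * u b) \<in> U" using sub_scal[OF U less.prems] by blast
      have add: "\<forall>u\<in>U. \<forall>v\<in>U. (\<lambda>b. u b + v b) \<in> U" using U by (simp add: submoduleT_def)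
      from add[rule_format, OF a1 a2] show ?thesis unfolding u'_def .
    qed
    have u'v: "u' b = (d b - lam) / (\<mu> - lam) * u b" for b
      unfolding u'_def by (simp add: divide_inverse algebra_simps)
    have sub: "d ` {b. u' b \<noteq> 0} - {\<mu>} \<subseteq> (d ` {b. u b \<noteq> 0} - {\<mu>}) - {lam}"
      by (auto simp: u'v)
    have "card (d ` {b. u' b \<noteq> 0} - {\<mu>}) < card (d ` {b. u b \<noteq> 0} - {\<mu>})"
    proof (rule le_less_trans[OF card_mono[OF _ sub]])
      show "finite (d ` {b. u b \<noteq> 0} - {\<mu>} - {lam})" using fin by simp
      show "card (d ` {b. u b \<noteq> 0} - {\<mu>} - {lam}) < card (d ` {b. u b \<noteq> 0} - {\<mu>})"
        using l fin by (intro card_Diff1_less) auto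
    qed
    hence "(\<lambda>b. if d b = \<mu> then u' b else 0) \<in> U" using less.hyps u'U by blast
    moreover have "(\<lambda>b. if d b = \<mu> then u' b else 0) = (\<lambda>b. if d b = \<mu> then u b else 0)"
      using l by (auto simp: fun_eq_iff u'v)
    ultimately show ?thesis by simp
  qed
qed

lemma wt_out: "b \<in> TB eps ls \<Longrightarrow> c \<notin> {1..k} \<Longrightarrow> wt b c = 0"
  unfolding wt_def by (intro sum.neutral) (auto simp: TB_def basisW_def)

lemma weight_vec:
  assumes U: "submoduleT eps xs ls U" and u: "u \<in> U" and b0: "u b0 \<noteq> 0"
  shows "\<exists>u'\<in>U. u' b0 \<noteq> 0 \<and> (\<forall>b. u' b \<noteq> 0 \<longrightarrow> wt b = wt b0)"
proof -
  have b0T: "b0 \<in> TB eps ls" using sub_vecs[OF U u] b0 by (auto simp: vecs_def)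
  have "finite C \<Longrightarrow> C \<subseteq> {1..k} \<Longrightarrow> (\<lambda>b. if \<forall>c\<in>C. wt b c = wt b0 c then u b else 0) \<in> U" for C
  proof (induction C rule: finite_induct)
    case empty thus ?case using u by simp
  next
    case (insert c C)
    let ?v = "\<lambda>b. if \<forall>c\<in>C. wt b c = wt b0 c then u b else 0"
    have vU: "?v \<in> U" using insert by simp
    have ck: "valid_gen k (W c)" using insert.prems by (simp add: valid_gen_def)
    have D: "(\<lambda>b. qpar eps c ^ wt b c * v b) \<in> U" if "v \<in> U" for v
      using sub_act[OF U that ck] act_W[OF sub_vecs[OF U that]] by simp
    have "(\<lambda>b. if qpar eps c ^ wt b c = qpar eps c ^ wt b0 c then ?v b else 0) \<in> U"
      by (rule proj_diag[OF U D vU])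
    moreover have "(\<lambda>b. if qpar eps c ^ wt b c = qpar eps c ^ wt b0 c then ?v b else 0)
        = (\<lambda>b. if \<forall>c\<in>insert c C. wt b c = wt b0 c then u b else 0)"
      by (auto simp: fun_eq_iff qpar_pow_inj)
    ultimately show ?case by simp
  qed
  hence uU: "(\<lambda>b. if \<forall>c\<in>{1..k}. wt b c = wt b0 c then u b else 0) \<in> U" by simp
  show ?thesis
  proof (rule bexI[OF _ uU], intro conjI allI impI)
    show "(if \<forall>c\<in>{1..k}. wt b0 c = wt b0 c then u b0 else 0) \<noteq> 0" using b0 by simp
    fix b assume h: "(if \<forall>c\<in>{1..k}. wt b c = wt b0 c then u b else 0) \<noteq> 0"
    hence bT: "b \<in> TB eps ls" using sub_vecs[OF U u] by (auto simp: vecs_def split: if_splits)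
    show "wt b = wt b0"
    proof
      fix c show "wt b c = wt b0 c"
        using h wt_out[OF bT] wt_out[OF b0T] by (cases "c \<in> {1..k}") (auto split: if_splits)
    qed
  qed
qed

lemma wt_pos: "b \<in> TB eps ls \<Longrightarrow> 0 < wt b s \<Longrightarrow> \<exists>p<r. 0 < (b ! p) s"
  unfolding wt_def using TB_len by (metis lessThan_iff not_gr_zero sum.neutral)

lemma wt_zero: "b \<in> TB eps ls \<Longrightarrow> wt b t = 0 \<Longrightarrow> p < r \<Longrightarrow> (b ! p) t = 0"
  unfolding wt_def using TB_len by fastforce

lemma moveA:
  assumes U: "submoduleT eps xs ls U" and u: "u \<in> U" and b0: "u b0 \<noteq> 0"
    and wtn: "\<forall>b. u b \<noteq> 0 \<longrightarrow> wt b = n"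
    and s: "s \<in> {1..k}" and t: "t \<in> {1..k}" and adj: "t = Suc s \<or> s = Suc t"
    and ns: "n s \<ge> 1" and nt: "n t = 0"
  shows "\<exists>u'\<in>U. \<exists>b1. u' b1 \<noteq> 0 \<and> (\<forall>b. u' b \<noteq> 0 \<longrightarrow> wt b = mvt s t n)"
proof -
  let ?g = "mvgen s t"
  note mg = mvgen[OF s t adj]
  have st: "s \<noteq> t" using adj by auto
  have uv: "u \<in> vecs eps ls" using sub_vecs[OF U u] .
  have b0T: "b0 \<in> TB eps ls" using uv b0 by (auto simp: vecs_def)
  have wb0: "wt b0 = n" using wtn b0 by blast
  have "0 < wt b0 s" using wb0 ns by simp
  from wt_pos[OF b0T this] obtain p where p: "p < r" "0 < (b0 ! p) s" by blast
  have lb0: "length b0 = r" using b0T TB_len by blast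
  have b0p: "b0 ! p \<in> basisW eps (ls ! p)" using b0T p by (simp add: TB_def)
  have t0: "(b0 ! p) t = 0" using wt_zero[OF b0T _ p(1)] wb0 nt by simp
  have mvB: "mvt s t (b0 ! p) \<in> basisW eps (ls ! p)"
    by (rule mvt_basisW[OF b0p p(2) st t]) (use t0 in simp)
  define b1 where "b1 = b0[p := mvt s t (b0 ! p)]"
  have b1p: "b1 ! p = mvt s t (b0 ! p)" unfolding b1_def using lb0 p by simp
  have key: "act eps xs ls ?g (dl b) b1 = (if b = b0 then cf eps xs ls ?g p b0 else 0)"
    if bT: "b \<in> TB eps ls" and ub: "u b \<noteq> 0" for b
  proof -
    have wb: "wt b = n" using wtn ub by blast
    have lb: "length b = r" using bT TB_len by blast
    have uniq: "p' = p \<and> b = b0" if p': "p' < r" "0 < (b ! p') s" "b1 = b[p' := mvt s t (b ! p')]" for p'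
    proof -
      have "(b1 ! p') t = (b ! p') t + 1" using p' lb st by (simp add: mvt_apply)
      hence "(b1 ! p') t \<noteq> 0" by simp
      hence pp: "p' = p"
        using wt_zero[OF b0T _ p'(1)] wb0 nt unfolding b1_def by (cases "p' = p") auto
      have "mvt s t (b ! p) = mvt s t (b0 ! p)" using p' pp lb b1p by simp
      hence e: "b ! p = b0 ! p" using mvt_inj[OF st] p'(2) pp p(2) by blast
      have "b = b0"
      proof (rule nth_equalityI)
        show "length b = length b0" using lb lb0 by simp
        fix q assume "q < length b"
        thus "b ! q = b0 ! q" using e p'(3) pp unfolding b1_def
          by (cases "q = p") (auto simp: list_eq_iff_nth_eq nth_list_update split: if_splits)
      qed
      thus ?thesis using pp by simp
    qed
    have "act eps xs ls ?g (dl b) b1 = (\<Sum>p'<r. if 0 < (b ! p') s \<and> mvt s t (b ! p') \<in> basisW eps (ls ! p')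
        \<and> b1 = b[p' := mvt s t (b ! p')] then cf eps xs ls ?g p' b else 0)"
      using act_dl_EF[OF bT k2 mg(1)] mg by simp
    also have "\<dots> = (\<Sum>p'<r. if p' = p \<and> b = b0 then cf eps xs ls ?g p b0 else 0)"
    proof (intro sum.cong refl)
      fix p' assume "p' \<in> {..<r}"
      thus "(if 0 < (b ! p') s \<and> mvt s t (b ! p') \<in> basisW eps (ls ! p') \<and> b1 = b[p' := mvt s t (b ! p')]
          then cf eps xs ls ?g p' b else 0) = (if p' = p \<and> b = b0 then cf eps xs ls ?g p b0 else 0)"
        using uniq mvB p unfolding b1_def by auto
    qed
    also have "\<dots> = (if b = b0 then cf eps xs ls ?g p b0 else 0)" using p(1) by (simp add: sum.delta)
    finally show ?thesis .
  qed
  have "act eps xs ls ?g u b1 = (\<Sum>b\<in>TB eps ls. u b * act eps xs ls ?g (dl b) b1)"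
    by (subst act_lin) simp
  also have "\<dots> = (\<Sum>b\<in>TB eps ls. if b = b0 then u b0 * cf eps xs ls ?g p b0 else 0)"
  proof (intro sum.cong refl)
    fix b assume bT: "b \<in> TB eps ls"
    show "u b * act eps xs ls ?g (dl b) b1 = (if b = b0 then u b0 * cf eps xs ls ?g p b0 else 0)"
    proof (cases "u b = 0")
      case True thus ?thesis using b0 by auto
    next
      case False thus ?thesis using key[OF bT False] by simp
    qed
  qed
  also have "\<dots> = u b0 * cf eps xs ls ?g p b0" using b0T finite_TB by simp
  finally have nz: "act eps xs ls ?g u b1 \<noteq> 0" using b0 cf_nz[OF p(1)] p(2) mg by simp
  have sup: "wt b = mvt s t n" if h: "act eps xs ls ?g u b \<noteq> 0" for b
  proof -
    have "(\<Sum>b''\<in>TB eps ls. u b'' * act eps xs ls ?g (dl b'') b) \<noteq> 0" using h by (subst (asm) act_lin) simp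
    then obtain b'' where b'': "b'' \<in> TB eps ls" "u b'' \<noteq> 0" "act eps xs ls ?g (dl b'') b \<noteq> 0"
      by (metis (no_types, lifting) mult_eq_0_iff sum.neutral)
    hence "(\<Sum>p'<r. if 0 < (b'' ! p') s \<and> mvt s t (b'' ! p') \<in> basisW eps (ls ! p')
        \<and> b = b''[p' := mvt s t (b'' ! p')] then cf eps xs ls ?g p' b'' else 0) \<noteq> 0"
      using act_dl_EF[OF b''(1) k2 mg(1)] mg by simp
    from sum.not_neutral_contains_not_neutral[OF this] obtain p' where
      "p' \<in> {..<r}" "(if 0 < (b'' ! p') s \<and> mvt s t (b'' ! p') \<in> basisW eps (ls ! p')
        \<and> b = b''[p' := mvt s t (b'' ! p')] then cf eps xs ls ?g p' b'' else 0) \<noteq> 0" by blast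
    hence p': "p' < r" "0 < (b'' ! p') s" "b = b''[p' := mvt s t (b'' ! p')]" by (auto split: if_splits)
    have "wt b = mvt s t (wt b'')" using wt_upd[of p' b'' s t] p' b''(1) TB_len st by simp
    thus ?thesis using wtn b''(2) by simp
  qed
  show ?thesis using sub_act[OF U u mg(4)] nz sup by blast
qed

lemma moveC:
  assumes U: "submoduleT eps xs ls U" and cT: "c \<in> TB eps ls" and wc: "wt c = n"
    and s: "s \<in> {1..k}" and t: "t \<in> {1..k}" and adj: "t = Suc s \<or> s = Suc t"
    and ns: "n s \<ge> 1" and nt: "n t = 0"
    and IH: "\<forall>c'\<in>TB eps ls. wt c' = mvt s t n \<longrightarrow> dl c' \<in> U"
  shows "dl c \<in> U"
proof -
  have adj': "s = Suc t \<or> t = Suc s" using adj by blast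
  let ?g = "mvgen t s"
  note mg = mvgen[OF t s adj']
  have st: "s \<noteq> t" using adj by auto
  have "0 < wt c s" using wc ns by simp
  from wt_pos[OF cT this] obtain p where p: "p < r" "0 < (c ! p) s" by blast
  have lc: "length c = r" using cT TB_len by blast
  have cp: "c ! p \<in> basisW eps (ls ! p)" using cT p by (simp add: TB_def)
  have t0: "(c ! p) t = 0" using wt_zero[OF cT _ p(1)] wc nt by simp
  have mvB: "mvt s t (c ! p) \<in> basisW eps (ls ! p)"
    by (rule mvt_basisW[OF cp p(2) st t]) (use t0 in simp)
  define c1 where "c1 = c[p := mvt s t (c ! p)]"
  have c1T: "c1 \<in> TB eps ls" unfolding c1_def using TB_upd[OF cT p(1) mvB] .
  have c1p: "c1 ! p = mvt s t (c ! p)" unfolding c1_def using lc p by simp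
  have wc1: "wt c1 = mvt s t n" unfolding c1_def using wt_upd[OF _ p(2) st] lc p wc by simp
  have dc1: "dl c1 \<in> U" using IH c1T wc1 by blast
  have c1pt: "(c1 ! p) t = 1" using c1p t0 st by (simp add: mvt_apply)
  have bk: "c1[p := mvt t s (c1 ! p)] = c"
    unfolding c1p c1_def using mvt_back[where m="c ! p", OF st p(2)] lc p by simp
  have act: "act eps xs ls ?g (dl c1) = (\<lambda>b'. cf eps xs ls ?g p c1 * dl c b')"
  proof
    fix b'
    have "act eps xs ls ?g (dl c1) b' = (\<Sum>p'<r. if 0 < (c1 ! p') t \<and> mvt t s (c1 ! p') \<in> basisW eps (ls ! p')
        \<and> b' = c1[p' := mvt t s (c1 ! p')] then cf eps xs ls ?g p' c1 else 0)"
      using act_dl_EF[OF c1T k2 mg(1)] mg by simp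
    also have "\<dots> = (\<Sum>p'<r. if p' = p then (if b' = c then cf eps xs ls ?g p c1 else 0) else 0)"
    proof (intro sum.cong refl)
      fix p' assume p'r: "p' \<in> {..<r}"
      show "(if 0 < (c1 ! p') t \<and> mvt t s (c1 ! p') \<in> basisW eps (ls ! p') \<and> b' = c1[p' := mvt t s (c1 ! p')]
          then cf eps xs ls ?g p' c1 else 0) = (if p' = p then (if b' = c then cf eps xs ls ?g p c1 else 0) else 0)"
      proof (cases "p' = p")
        case True
        have "mvt t s (c1 ! p) = c ! p" unfolding c1p using mvt_back[where m="c ! p", OF st p(2)] .
        thus ?thesis using True c1pt bk cp by auto
      next
        case False
        have "(c1 ! p') t = 0" unfolding c1_def using False wt_zero[OF cT _ ] wc nt p'r by simp
        thus ?thesis using False by simp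
      qed
    qed
    also have "\<dots> = cf eps xs ls ?g p c1 * dl c b'" using p(1) by (simp add: dl_def)
    finally show "act eps xs ls ?g (dl c1) b' = cf eps xs ls ?g p c1 * dl c b'" .
  qed
  have cfnz: "cf eps xs ls ?g p c1 \<noteq> 0" using cf_nz[OF p(1)] mg c1pt by simp
  have "(\<lambda>b. inverse (cf eps xs ls ?g p c1) * act eps xs ls ?g (dl c1) b) \<in> U"
    using sub_scal[OF U sub_act[OF U dc1 mg(4)]] .
  moreover have "(\<lambda>b. inverse (cf eps xs ls ?g p c1) * act eps xs ls ?g (dl c1) b) = dl c"
    unfolding act using cfnz by (simp add: fun_eq_iff)
  ultimately show ?thesis by simp
qed

end

context ctx begin

lemma FF_wt: "b \<in> TB eps ls \<Longrightarrow> FF (wt b) k = sum_list ls"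
proof -
  assume b: "b \<in> TB eps ls"
  have lb: "length b = r" using b TB_len by blast
  have "FF (wt b) k = (\<Sum>q<r. \<Sum>c\<in>{1..k}. (b ! q) c)"
    unfolding FF_def wt_def lb by (rule sum.swap)
  also have "\<dots> = (\<Sum>q<r. ls ! q)"
    by (intro sum.cong refl) (use b in \<open>auto simp: TB_def basisW_def\<close>)
  also have "\<dots> = sum_list ls" by (simp add: sum_list_sum_nth atLeast0LessThan)
  finally show ?thesis .
qed

lemma stepA:
  assumes U: "submoduleT eps xs ls U" and n01: "\<forall>c. n0 c \<le> 1" and F0: "FF n0 k = sum_list ls"
  shows "u \<in> U \<Longrightarrow> u b0 \<noteq> 0 \<Longrightarrow> (\<forall>b. u b \<noteq> 0 \<longrightarrow> wt b = n) \<Longrightarrow>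
    \<exists>u'\<in>U. \<exists>b1. u' b1 \<noteq> 0 \<and> (\<forall>b. u' b \<noteq> 0 \<longrightarrow> (\<forall>c\<in>{1..k}. wt b c = n0 c))"
proof (induction "Phi k n n0" arbitrary: u b0 n rule: less_induct)
  case less
  show ?case
  proof (cases "\<forall>c\<in>{1..k}. n c = n0 c")
    case True thus ?thesis using less.prems by blast
  next
    case False
    have b0T: "b0 \<in> TB eps ls" using sub_vecs[OF U less.prems(1)] less.prems(2) by (auto simp: vecs_def)
    have wn: "wt b0 = n" using less.prems by blast
    have Fk: "FF n k = FF n0 k" using FF_wt[OF b0T] wn F0 by simp
    obtain s t where st: "s \<in> {1..k}" "t \<in> {1..k}" "t = Suc s \<or> s = Suc t" "n s \<ge> 1" "n t = 0"
      "Phi k (mvt s t n) n0 < Phi k n n0"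
      using comb_move[OF n01 Fk] False by blast
    obtain u' b1 where u': "u' \<in> U" "u' b1 \<noteq> 0" "\<forall>b. u' b \<noteq> 0 \<longrightarrow> wt b = mvt s t n"
      using moveA[OF U less.prems(1,2,3) st(1-5)] by blast
    show ?thesis using less.hyps[OF st(6) u'] .
  qed
qed

lemma stepC:
  assumes U: "submoduleT eps xs ls U" and n01: "\<forall>c. n0 c \<le> 1" and F0: "FF n0 k = sum_list ls"
    and base: "\<forall>c\<in>TB eps ls. (\<forall>x\<in>{1..k}. wt c x = n0 x) \<longrightarrow> dl c \<in> U"
  shows "c \<in> TB eps ls \<Longrightarrow> dl c \<in> U"
proof (induction "Phi k (wt c) n0" arbitrary: c rule: less_induct)
  case less
  show ?case
  proof (cases "\<forall>x\<in>{1..k}. wt c x = n0 x")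
    case True thus ?thesis using less.prems base by blast
  next
    case False
    have Fk: "FF (wt c) k = FF n0 k" using FF_wt[OF less.prems] F0 by simp
    obtain s t where st: "s \<in> {1..k}" "t \<in> {1..k}" "t = Suc s \<or> s = Suc t" "wt c s \<ge> 1" "wt c t = 0"
      "Phi k (mvt s t (wt c)) n0 < Phi k (wt c) n0"
      using comb_move[OF n01 Fk] False by blast
    have IH: "\<forall>c'\<in>TB eps ls. wt c' = mvt s t (wt c) \<longrightarrow> dl c' \<in> U"
      using less.hyps st(6) by auto
    show ?thesis using moveC[OF U less.prems refl st(1-5) IH] .
  qed
qed

end

context ctx begin

definition zs :: "nat list" where "zs = filter (\<lambda>c. eps ! (c - 1) = 0) [1..<Suc k]"
abbreviation "M \<equiv> length zs"
definition zf :: "nat \<Rightarrow> nat" where "zf j = zs ! (j - 1)"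

lemma nzeros_M: "nzeros eps = M"
proof -
  have e: "map (\<lambda>c. eps ! (c - 1)) [1..<Suc k] = eps" by (rule nth_equalityI) (simp_all del: upt_Suc)
  have "nzeros eps = length (filter (\<lambda>a. a = 0) (map (\<lambda>c. eps ! (c - 1)) [1..<Suc k]))"
    unfolding nzeros_def e ..
  also have "\<dots> = M" unfolding zs_def filter_map by (simp add: comp_def)
  finally show ?thesis .
qed

lemma zs_set: "set zs = {c. zero c}"
  by (auto simp: zs_def zero_def)

lemma zs_sorted: "sorted_wrt (<) zs"
  unfolding zs_def by (rule sorted_wrt_filter, rule sorted_wrt_upt)

lemma zf_mono: "1 \<le> i \<Longrightarrow> i < j \<Longrightarrow> j \<le> M \<Longrightarrow> zf i < zf j"
  unfolding zf_def using sorted_wrt_nth_less[OF zs_sorted, of "i - 1" "j - 1"] by simp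

lemma zf_mono_iff: "i \<in> {1..M} \<Longrightarrow> j \<in> {1..M} \<Longrightarrow> zf i < zf j \<longleftrightarrow> i < j"
proof -
  assume ij: "i \<in> {1..M}" "j \<in> {1..M}"
  show ?thesis
  proof (cases i j rule: linorder_cases)
    case less thus ?thesis using zf_mono[of i j] ij by auto
  next
    case equal thus ?thesis by simp
  next
    case greater thus ?thesis using zf_mono[of j i] ij by auto
  qed
qed

lemma zf_inj: "i \<in> {1..M} \<Longrightarrow> j \<in> {1..M} \<Longrightarrow> zf i = zf j \<longleftrightarrow> i = j"
proof -
  assume ij: "i \<in> {1..M}" "j \<in> {1..M}"
  show ?thesis
  proof (cases i j rule: linorder_cases)
    case less thus ?thesis using zf_mono[of i j] ij by auto
  next
    case equal thus ?thesis by simp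
  next
    case greater thus ?thesis using zf_mono[of j i] ij by auto
  qed
qed

lemma zf_zero: "j \<in> {1..M} \<Longrightarrow> zero (zf j)"
proof -
  assume j: "j \<in> {1..M}"
  hence "zf j \<in> set zs" unfolding zf_def by auto
  thus ?thesis using zs_set by auto
qed

lemma zf_range: "j \<in> {1..M} \<Longrightarrow> zf j \<in> {1..k}"
  using zf_zero by (simp add: zero_def)

lemma zf_surj: "zero c \<Longrightarrow> \<exists>j\<in>{1..M}. zf j = c"
proof -
  assume "zero c"
  hence "c \<in> set zs" using zs_set by auto
  then obtain i where i: "i < M" "zs ! i = c" by (auto simp: in_set_conv_nth)
  thus ?thesis by (intro bexI[of _ "Suc i"]) (auto simp: zf_def)
qed

lemma notzero_one: "c \<in> {1..k} \<Longrightarrow> \<not> zero c \<Longrightarrow> one c"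
  using one_zero by blast

lemma between_one:
  assumes "j \<in> {1..M}" "Suc j \<le> M" "zf j < c" "c < zf (Suc j)"
  shows "one c"
proof -
  have ck: "c \<in> {1..k}" using assms zf_range[of "Suc j"] zf_range[of j] by auto
  have "\<not> zero c"
  proof
    assume "zero c"
    then obtain l where l: "l \<in> {1..M}" "zf l = c" using zf_surj by blast
    have "j < l" using zf_mono_iff[of j l] assms l by auto
    moreover have "l < Suc j" using zf_mono_iff[of l "Suc j"] assms l by auto
    ultimately show False by simp
  qed
  thus ?thesis using notzero_one ck by blast
qed

lemma below_one:
  assumes "1 \<le> M" "1 \<le> c" "c < zf 1" shows "one c"
proof -
  have ck: "c \<in> {1..k}" using assms zf_range[of 1] by auto
  have "\<not> zero c"
  proof
    assume "zero c"
    then obtain l where l: "l \<in> {1..M}" "zf l = c" using zf_surj by blast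
    have "l < 1" using zf_mono_iff[of l 1] assms l by auto
    thus False using l by simp
  qed
  thus ?thesis using notzero_one ck by blast
qed

lemma above_one:
  assumes "1 \<le> M" "zf M < c" "c \<le> k" shows "one c"
proof -
  have ck: "c \<in> {1..k}" using assms zf_range[of M] by auto
  have "\<not> zero c"
  proof
    assume "zero c"
    then obtain l where l: "l \<in> {1..M}" "zf l = c" using zf_surj by blast
    have "M < l" using zf_mono_iff[of M l] assms l by auto
    thus False using l by simp
  qed
  thus ?thesis using notzero_one ck by blast
qed

definition emb :: "(nat \<Rightarrow> nat) \<Rightarrow> (nat \<Rightarrow> nat)" where
  "emb m' c = (\<Sum>j\<in>{1..M}. if zf j = c then m' j else 0)"
definition res :: "(nat \<Rightarrow> nat) \<Rightarrow> (nat \<Rightarrow> nat)" where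
  "res m j = (if j \<in> {1..M} then m (zf j) else 0)"

lemma emb_zf: "j \<in> {1..M} \<Longrightarrow> emb m' (zf j) = m' j"
proof -
  assume j: "j \<in> {1..M}"
  have "emb m' (zf j) = (\<Sum>i\<in>{1..M}. if i = j then m' i else 0)"
    unfolding emb_def by (intro sum.cong refl) (use j zf_inj in auto)
  thus ?thesis using j by simp
qed

lemma emb_out: "(\<forall>j\<in>{1..M}. zf j \<noteq> c) \<Longrightarrow> emb m' c = 0"
  unfolding emb_def by (intro sum.neutral) auto

lemma emb_notzero: "\<not> zero c \<Longrightarrow> emb m' c = 0"
  using emb_out zf_zero by metis

lemma emb_sum: "(\<Sum>c\<in>{1..k}. emb m' c) = (\<Sum>j\<in>{1..M}. m' j)"
proof -
  have "(\<Sum>c\<in>{1..k}. emb m' c) = (\<Sum>j\<in>{1..M}. \<Sum>c\<in>{1..k}. if zf j = c then m' j else 0)"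
    unfolding emb_def by (rule sum.swap)
  also have "\<dots> = (\<Sum>j\<in>{1..M}. m' j)"
    by (intro sum.cong refl) (use zf_range in \<open>auto simp: sum.delta\<close>)
  finally show ?thesis .
qed

lemma res_emb: "(\<forall>j. m' j \<noteq> 0 \<longrightarrow> j \<in> {1..M}) \<Longrightarrow> res (emb m') = m'"
  by (auto simp: fun_eq_iff res_def emb_zf)

lemma emb_res: "(\<forall>c. m c \<noteq> 0 \<longrightarrow> zero c) \<Longrightarrow> emb (res m) = m"
proof
  fix c assume h: "\<forall>c. m c \<noteq> 0 \<longrightarrow> zero c"
  show "emb (res m) c = m c"
  proof (cases "zero c")
    case True
    then obtain j where "j \<in> {1..M}" "zf j = c" using zf_surj by blast
    thus ?thesis using emb_zf by (auto simp: res_def)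
  next
    case False thus ?thesis using h emb_notzero by metis
  qed
qed

abbreviation "epsZ \<equiv> replicate M (0::nat)"

lemma basisZ: "basisW epsZ s = {m'. (\<forall>j. m' j \<noteq> 0 \<longrightarrow> j \<in> {1..M}) \<and> (\<Sum>j=1..M. m' j) = s}"
  by (auto simp: basisW_def)

lemma emb_basis: "m' \<in> basisW epsZ s \<Longrightarrow> emb m' \<in> basisW eps s"
proof -
  assume m: "m' \<in> basisW epsZ s"
  have "\<forall>c. emb m' c \<noteq> 0 \<longrightarrow> c \<in> {1..k}"
  proof (intro allI impI)
    fix c assume "emb m' c \<noteq> 0" hence "zero c" using emb_notzero by metis
    thus "c \<in> {1..k}" by (simp add: zero_def)
  qed
  moreover have "emb m' c \<le> 1" if "c \<in> {1..k}" "eps ! (c - 1) = 1" for c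
    using that emb_notzero by (auto simp: zero_def)
  moreover have "(\<Sum>c=1..k. emb m' c) = s" using m emb_sum by (simp add: basisZ)
  ultimately show ?thesis by (auto simp: basisW_def)
qed

lemma res_basis: "m \<in> basisW eps s \<Longrightarrow> (\<forall>c. m c \<noteq> 0 \<longrightarrow> zero c) \<Longrightarrow> res m \<in> basisW epsZ s"
proof -
  assume m: "m \<in> basisW eps s" and z: "\<forall>c. m c \<noteq> 0 \<longrightarrow> zero c"
  have "(\<Sum>j=1..M. res m j) = (\<Sum>c=1..k. emb (res m) c)" using emb_sum by simp
  also have "\<dots> = s" using emb_res[OF z] m by (simp add: basisW_def)
  finally show ?thesis by (auto simp: basisZ res_def)
qed

lemma mvt_emb:
  assumes a: "a \<in> {1..M}" and t: "t \<in> {1..M}" and at: "a \<noteq> t"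
  shows "emb (mvt a t m') = mvt (zf a) (zf t) (emb m')"
proof
  fix c
  have zne: "zf a \<noteq> zf t" using zf_inj a t at by blast
  show "emb (mvt a t m') c = mvt (zf a) (zf t) (emb m') c"
  proof (cases "zero c")
    case True
    then obtain j where j: "j \<in> {1..M}" "zf j = c" using zf_surj by blast
    thus ?thesis using emb_zf[OF j(1)] emb_zf[OF a] emb_zf[OF t] zf_inj[OF j(1) a] zf_inj[OF j(1) t] at zne
      by (auto simp: mvt_apply)
  next
    case False
    have "c \<noteq> zf a" "c \<noteq> zf t" using False zf_zero a t by auto
    thus ?thesis using False emb_notzero by (simp add: mvt_apply[OF at] mvt_apply[OF zne])
  qed
qed

lemma hh_emb: "j \<in> {1..M} \<Longrightarrow> hh eps (emb m') (zf j) = hh epsZ m' j"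
proof -
  assume j: "j \<in> {1..M}"
  have "eps ! (zf j - 1) = 0" using zf_zero[OF j] by (simp add: zero_def)
  moreover have "j - 1 < M" using j by auto
  hence "epsZ ! (j - 1) = 0" by simp
  ultimately show ?thesis using j by (simp add: hh_def qpar_def emb_zf)
qed

definition TBZ where "TBZ = TB epsZ ls"
definition embL :: "(nat \<Rightarrow> nat) list \<Rightarrow> (nat \<Rightarrow> nat) list" where "embL = map emb"
definition E0 where "E0 = embL ` TBZ"
definition lift :: "((nat \<Rightarrow> nat) list \<Rightarrow> K) \<Rightarrow> ((nat \<Rightarrow> nat) list \<Rightarrow> K)" where
  "lift v' = (\<lambda>b. if b \<in> E0 then v' (map res b) else 0)"

lemma TBZ_supp: "c' \<in> TBZ \<Longrightarrow> p < r \<Longrightarrow> (c' ! p) j \<noteq> 0 \<Longrightarrow> j \<in> {1..M}"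
  by (auto simp: TBZ_def TB_def basisZ)

lemma res_embL: "c' \<in> TBZ \<Longrightarrow> map res (embL c') = c'"
proof (rule nth_equalityI)
  assume c: "c' \<in> TBZ"
  show "length (map res (embL c')) = length c'" by (simp add: embL_def)
  fix i assume "i < length (map res (embL c'))"
  hence i: "i < r" using c by (simp add: embL_def TBZ_def TB_def)
  show "map res (embL c') ! i = c' ! i" using i c res_emb TBZ_supp[OF c i] by (simp add: embL_def TBZ_def TB_def)
qed

lemma embL_inj: "c' \<in> TBZ \<Longrightarrow> c'' \<in> TBZ \<Longrightarrow> embL c' = embL c'' \<longleftrightarrow> c' = c''"
  using res_embL by metis

lemma embL_TB: "c' \<in> TBZ \<Longrightarrow> embL c' \<in> TB eps ls"
  by (auto simp: TBZ_def TB_def embL_def emb_basis)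

lemma E0_TB: "E0 \<subseteq> TB eps ls"
  using embL_TB by (auto simp: E0_def)

lemma embL_nth: "p < length c' \<Longrightarrow> embL c' ! p = emb (c' ! p)"
  by (simp add: embL_def)

lemma E0_V0: "b \<in> E0 \<Longrightarrow> t < r \<Longrightarrow> one c \<Longrightarrow> (b ! t) c = 0"
proof -
  assume a: "b \<in> E0" "t < r" "one c"
  have nz: "\<not> zero c" using a(3) zero_not_one by blast
  from a(1) obtain x where "x \<in> TBZ" "b = embL x" by (auto simp: E0_def)
  thus ?thesis using a(2) emb_notzero[OF nz] by (auto simp: embL_def TBZ_def TB_def)
qed

lemma zero_supp_E0:
  assumes b: "b \<in> TB eps ls" and z: "\<forall>t<r. \<forall>c. (b ! t) c \<noteq> 0 \<longrightarrow> zero c"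
  shows "b \<in> E0"
proof -
  have lb: "length b = r" using b TB_len by blast
  have "map res b \<in> TBZ"
    using b z res_basis by (auto simp: TBZ_def TB_def)
  moreover have "embL (map res b) = b"
    by (rule nth_equalityI) (use lb z emb_res in \<open>auto simp: embL_def\<close>)
  ultimately show ?thesis unfolding E0_def by force
qed

lemma lift_dl: "c' \<in> TBZ \<Longrightarrow> lift (dl c') = dl (embL c')"
proof
  fix b assume c: "c' \<in> TBZ"
  show "lift (dl c') b = dl (embL c') b"
  proof (cases "b \<in> E0")
    case True
    then obtain c'' where c'': "c'' \<in> TBZ" "b = embL c''" by (auto simp: E0_def)
    thus ?thesis using True res_embL[OF c''(1)] embL_inj[OF c c''(1)] by (auto simp: lift_def dl_def)
  next
    case False
    have "embL c' \<in> E0" using c by (simp add: E0_def)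
    hence "b \<noteq> embL c'" using False by blast
    thus ?thesis using False by (simp add: lift_def dl_def)
  qed
qed

lemma lift_sum: "lift (\<lambda>b'. \<Sum>q\<in>P. c q * f q b') = (\<lambda>b. \<Sum>q\<in>P. c q * lift (f q) b)"
  by (auto simp: lift_def fun_eq_iff)

lemma lift_vecs: "lift v' \<in> vecs eps ls"
  using E0_TB by (auto simp: lift_def vecs_def)

lemma lift_decomp: "v' \<in> vecs epsZ ls \<Longrightarrow> lift v' = (\<lambda>b. \<Sum>c'\<in>TBZ. v' c' * dl (embL c') b)"
proof -
  assume v: "v' \<in> vecs epsZ ls"
  have "v' = (\<lambda>b'. \<Sum>c'\<in>TBZ. v' c' * dl c' b')"
  proof
    fix b'
    show "v' b' = (\<Sum>c'\<in>TBZ. v' c' * dl c' b')"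
    proof (cases "b' \<in> TBZ")
      case True thus ?thesis using finite_TB[of epsZ ls] by (simp add: TBZ_def dl_def if_distrib sum.delta' cong: if_cong)
    next
      case False
      hence "v' b' = 0" using v by (simp add: vecs_def TBZ_def)
      moreover have "(\<Sum>c'\<in>TBZ. v' c' * dl c' b') = 0" using False by (intro sum.neutral) (auto simp: dl_def)
      ultimately show ?thesis by simp
    qed
  qed
  hence "lift v' = lift (\<lambda>b'. \<Sum>c'\<in>TBZ. v' c' * dl c' b')" by simp
  also have "\<dots> = (\<lambda>b. \<Sum>c'\<in>TBZ. v' c' * lift (dl c') b)" by (rule lift_sum)
  also have "\<dots> = (\<lambda>b. \<Sum>c'\<in>TBZ. v' c' * dl (embL c') b)" using lift_dl by simp
  finally show ?thesis .
qed

end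

lemma act_W0: "act eps xs ls (W c) v = (\<lambda>b. if b \<in> TB eps ls then (\<Prod>t<length ls. qpar eps c ^ (b ! t) c) * v b else 0)"
proof
  fix b
  show "act eps xs ls (W c) v b = (if b \<in> TB eps ls then (\<Prod>t<length ls. qpar eps c ^ (b ! t) c) * v b else 0)"
  proof (cases "b \<in> TB eps ls")
    case True
    have "(\<Sum>b'\<in>TB eps ls. entT eps xs ls (W c) b b' * v b') = (\<Sum>b'\<in>TB eps ls. if b' = b then (\<Prod>t<length ls. qpar eps c ^ (b ! t) c) * v b else 0)"
      by (intro sum.cong) (auto simp: entT_def)
    thus ?thesis using True finite_TB by (simp add: act_def sum.delta)
  qed (simp add: act_def)
qed

lemma act_Winv0: "act eps xs ls (Winv c) v = (\<lambda>b. if b \<in> TB eps ls then inverse (\<Prod>t<length ls. qpar eps c ^ (b ! t) c) * v b else 0)"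
proof
  fix b
  show "act eps xs ls (Winv c) v b = (if b \<in> TB eps ls then inverse (\<Prod>t<length ls. qpar eps c ^ (b ! t) c) * v b else 0)"
  proof (cases "b \<in> TB eps ls")
    case True
    have "(\<Sum>b'\<in>TB eps ls. entT eps xs ls (Winv c) b b' * v b') = (\<Sum>b'\<in>TB eps ls. if b' = b then inverse (\<Prod>t<length ls. qpar eps c ^ (b ! t) c) * v b else 0)"
      by (intro sum.cong) (auto simp: entT_def)
    thus ?thesis using True finite_TB by (simp add: act_def sum.delta)
  qed (simp add: act_def)
qed

locale ctxB = ctx +
  assumes M2: "2 \<le> length (ctx.zs eps)"

sublocale ctxB \<subseteq> Z: ctx "replicate (length zs) 0" xs ls
  using M2 lxs xnz by unfold_locales auto

context ctxB begin

lemma qpar_zf: "j \<in> {1..M} \<Longrightarrow> qpar eps (zf j) = qpar epsZ j"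
proof -
  assume j: "j \<in> {1..M}"
  have "eps ! (zf j - 1) = 0" using zf_zero[OF j] by (simp add: zero_def)
  moreover have "j - 1 < M" using j by auto
  hence "epsZ ! (j - 1) = 0" by simp
  ultimately show ?thesis by (simp add: qpar_def)
qed

lemma TBZ_TB: "TBZ = TB epsZ ls" by (simp add: TBZ_def)

lemma lift_W:
  assumes j: "j \<in> {1..M}"
  shows "lift (act epsZ xs ls (W j) v') = act eps xs ls (W (zf j)) (lift v')"
proof
  fix b
  show "lift (act epsZ xs ls (W j) v') b = act eps xs ls (W (zf j)) (lift v') b"
  proof (cases "b \<in> E0")
    case True
    then obtain c where c: "c \<in> TBZ" "b = embL c" by (auto simp: E0_def)
    have lc: "length c = r" using c TBZ_TB TB_len by metis
    have "(\<Prod>t<r. qpar eps (zf j) ^ (b ! t) (zf j)) = (\<Prod>t<r. qpar epsZ j ^ (c ! t) j)"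
      by (intro prod.cong refl) (use c lc j emb_zf qpar_zf in \<open>simp add: embL_nth\<close>)
    thus ?thesis using True c E0_TB res_embL TBZ_TB
      by (auto simp: lift_def act_W0)
  next
    case False thus ?thesis by (simp add: lift_def act_W0)
  qed
qed

lemma lift_Winv:
  assumes j: "j \<in> {1..M}"
  shows "lift (act epsZ xs ls (Winv j) v') = act eps xs ls (Winv (zf j)) (lift v')"
proof
  fix b
  show "lift (act epsZ xs ls (Winv j) v') b = act eps xs ls (Winv (zf j)) (lift v') b"
  proof (cases "b \<in> E0")
    case True
    then obtain c where c: "c \<in> TBZ" "b = embL c" by (auto simp: E0_def)
    have lc: "length c = r" using c TBZ_TB TB_len by metis
    have "(\<Prod>t<r. qpar eps (zf j) ^ (b ! t) (zf j)) = (\<Prod>t<r. qpar epsZ j ^ (c ! t) j)"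
      by (intro prod.cong refl) (use c lc j emb_zf qpar_zf in \<open>simp add: embL_nth\<close>)
    thus ?thesis using True c E0_TB res_embL TBZ_TB
      by (auto simp: lift_def act_Winv0)
  next
    case False thus ?thesis by (simp add: lift_def act_Winv0)
  qed
qed

lemma lift_chain:
  assumes g': "isEF M g'"
    and okp: "ok k (zf (src M g')) gs" and ne: "gs \<noteq> []"
    and vi: "\<forall>c\<in>set (butlast (vis k (zf (src M g')) gs)). one c"
    and en: "endp k (zf (src M g')) gs = zf (tgt M g')"
    and sS: "\<forall>g\<in>set gs. \<forall>p. side r g p = side r g' p"
    and XP: "\<forall>p<r. (\<Prod>g\<leftarrow>gs. Xf g (xs ! p)) = Xf g' (xs ! p)"
    and v: "v' \<in> vecs epsZ ls"
  shows "lift (act epsZ xs ls g' v') = chain eps xs ls gs (lift v')"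
proof -
  let ?a = "src M g'" and ?t = "tgt M g'"
  have M2': "2 \<le> M" using M2 by (simp add: zs_def)
  have a: "?a \<in> {1..M}" and t: "?t \<in> {1..M}" and at: "?a \<noteq> ?t"
    using src_tgt_range[OF g' M2'] by auto
  have zat: "zf ?a \<noteq> zf ?t" using zf_inj[OF a t] at by simp
  have per: "lift (act epsZ xs ls g' (dl c')) = chain eps xs ls gs (dl (embL c'))" if c: "c' \<in> TBZ" for c'
  proof
    fix b
    have lc: "length c' = r" using c TBZ_TB TB_len by metis
    have cT: "c' \<in> TB epsZ ls" using c TBZ_TB by simp
    have mvZ: "mvt ?a ?t (c' ! p) \<in> basisW epsZ (ls ! p)" if "p < r" "0 < (c' ! p) ?a" for p
    proof (rule mvt_basisW)
      show "c' ! p \<in> basisW epsZ (ls ! p)" using cT that by (simp add: TB_def)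
      have "?t - 1 < M" using t by auto
      thus "epsZ ! (?t - 1) = 1 \<Longrightarrow> (c' ! p) ?t = 0" by simp
    qed (use that at t in auto)
    have mvTB: "c'[p := mvt ?a ?t (c' ! p)] \<in> TBZ" if "p < r" "0 < (c' ! p) ?a" for p
      using TB_upd[OF cT that(1) mvZ[OF that]] TBZ_TB by simp
    have embupd: "embL (c'[p := mvt ?a ?t (c' ! p)]) = (embL c')[p := mvt (zf ?a) (zf ?t) (embL c' ! p)]"
      if "p < r" for p
      using that lc mvt_emb[OF a t at] by (simp add: embL_def map_update)
    have coef: "(\<Prod>u\<in>side r g' p. hh eps (embL c' ! u) (zf ?a) / hh eps (embL c' ! u) (zf ?t)) * (\<Prod>g\<leftarrow>gs. Xf g (xs ! p))
        * qq powi (int ((embL c' ! p) (zf ?a)) - int ((embL c' ! p) (zf ?t)) - 1) * qint (int ((embL c' ! p) (zf ?a)))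
      = cf epsZ xs ls g' p c'" if p: "p < r" for p
    proof -
      have "(\<Prod>u\<in>side r g' p. hh eps (embL c' ! u) (zf ?a) / hh eps (embL c' ! u) (zf ?t))
          = (\<Prod>u\<in>side r g' p. hh epsZ (c' ! u) ?a / hh epsZ (c' ! u) ?t)"
      proof (intro prod.cong refl)
        fix u assume "u \<in> side r g' p"
        hence "u < r" using side_sub[OF g' p] by auto
        thus "hh eps (embL c' ! u) (zf ?a) / hh eps (embL c' ! u) (zf ?t) = hh epsZ (c' ! u) ?a / hh epsZ (c' ! u) ?t"
          using lc hh_emb[OF a] hh_emb[OF t] by (simp add: embL_nth)
      qed
      moreover have "(embL c' ! p) (zf ?a) = (c' ! p) ?a" "(embL c' ! p) (zf ?t) = (c' ! p) ?t"
        using p lc emb_zf[OF a] emb_zf[OF t] by (simp_all add: embL_nth)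
      ultimately show ?thesis using XP p by (simp add: cf_def Let_def mult.assoc)
    qed
    have RHS: "chain eps xs ls gs (dl (embL c')) b = (\<Sum>p<r. if 0 < (embL c' ! p) (zf ?a) \<and> b = (embL c')[p := mvt (zf ?a) (zf ?t) (embL c' ! p)]
       then (\<Prod>u\<in>side r g' p. hh eps (embL c' ! u) (zf ?a) / hh eps (embL c' ! u) (zf ?t)) * (\<Prod>g\<leftarrow>gs. Xf g (xs ! p))
        * qq powi (int ((embL c' ! p) (zf ?a)) - int ((embL c' ! p) (zf ?t)) - 1) * qint (int ((embL c' ! p) (zf ?a))) else 0)"
    proof -
      have "embL c' \<in> E0" using c by (simp add: E0_def)
      hence v0: "\<forall>t<r. \<forall>c. one c \<longrightarrow> (embL c' ! t) c = 0" using E0_V0 by blast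
      show ?thesis using full[OF okp ne vi en zf_zero[OF a] zf_zero[OF t] zat embL_TB[OF c] v0 sS] by simp
    qed
    also have "\<dots> = (\<Sum>p<r. if 0 < (c' ! p) ?a \<and> b = embL (c'[p := mvt ?a ?t (c' ! p)]) then cf epsZ xs ls g' p c' else 0)"
    proof (intro sum.cong refl)
      fix p assume "p \<in> {..<r}"
      hence p: "p < r" by simp
      have e1: "(embL c' ! p) (zf ?a) = (c' ! p) ?a" using p lc emb_zf[OF a] by (simp add: embL_nth)
      show "(if 0 < (embL c' ! p) (zf ?a) \<and> b = (embL c')[p := mvt (zf ?a) (zf ?t) (embL c' ! p)]
       then (\<Prod>u\<in>side r g' p. hh eps (embL c' ! u) (zf ?a) / hh eps (embL c' ! u) (zf ?t)) * (\<Prod>g\<leftarrow>gs. Xf g (xs ! p))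
        * qq powi (int ((embL c' ! p) (zf ?a)) - int ((embL c' ! p) (zf ?t)) - 1) * qint (int ((embL c' ! p) (zf ?a))) else 0)
        = (if 0 < (c' ! p) ?a \<and> b = embL (c'[p := mvt ?a ?t (c' ! p)]) then cf epsZ xs ls g' p c' else 0)"
        unfolding embupd[OF p, symmetric] coef[OF p, symmetric] e1 ..
    qed
    finally have R: "chain eps xs ls gs (dl (embL c')) b = (\<Sum>p<r. if 0 < (c' ! p) ?a \<and> b = embL (c'[p := mvt ?a ?t (c' ! p)]) then cf epsZ xs ls g' p c' else 0)" .
    have L0: "act epsZ xs ls g' (dl c') b' = (\<Sum>p<r. if 0 < (c' ! p) ?a \<and> mvt ?a ?t (c' ! p) \<in> basisW epsZ (ls ! p)
        \<and> b' = c'[p := mvt ?a ?t (c' ! p)] then cf epsZ xs ls g' p c' else 0)" for b'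
      using act_dl_EF[OF cT Z.k2, of g' xs b'] g' by simp
    show "lift (act epsZ xs ls g' (dl c')) b = chain eps xs ls gs (dl (embL c')) b"
    proof (cases "b \<in> E0")
      case True
      then obtain c'' where c'': "c'' \<in> TBZ" "b = embL c''" by (auto simp: E0_def)
      have "lift (act epsZ xs ls g' (dl c')) b = act epsZ xs ls g' (dl c') c''"
        using True c'' res_embL by (simp add: lift_def)
      also have "\<dots> = (\<Sum>p<r. if 0 < (c' ! p) ?a \<and> b = embL (c'[p := mvt ?a ?t (c' ! p)]) then cf epsZ xs ls g' p c' else 0)"
        unfolding L0
      proof (intro sum.cong refl)
        fix p assume "p \<in> {..<r}"
        hence p: "p < r" by simp
        show "(if 0 < (c' ! p) ?a \<and> mvt ?a ?t (c' ! p) \<in> basisW epsZ (ls ! p) \<and> c'' = c'[p := mvt ?a ?t (c' ! p)]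
            then cf epsZ xs ls g' p c' else 0) = (if 0 < (c' ! p) ?a \<and> b = embL (c'[p := mvt ?a ?t (c' ! p)]) then cf epsZ xs ls g' p c' else 0)"
          using mvZ[OF p] mvTB[OF p] embL_inj[OF c''(1)] c''(2) by auto
      qed
      finally show ?thesis using R by simp
    next
      case False
      have "(\<Sum>p<r. if 0 < (c' ! p) ?a \<and> b = embL (c'[p := mvt ?a ?t (c' ! p)]) then cf epsZ xs ls g' p c' else 0) = 0"
      proof (intro sum.neutral ballI)
        fix p assume "p \<in> {..<r}"
        hence p: "p < r" by simp
        show "(if 0 < (c' ! p) ?a \<and> b = embL (c'[p := mvt ?a ?t (c' ! p)]) then cf epsZ xs ls g' p c' else 0) = 0"
          using mvTB[OF p] False by (auto simp: E0_def)
      qed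
      thus ?thesis using False R by (simp add: lift_def)
    qed
  qed
  have "lift (act epsZ xs ls g' v') = lift (\<lambda>b'. \<Sum>c'\<in>TBZ. v' c' * act epsZ xs ls g' (dl c') b')"
    by (subst act_lin) (simp add: TBZ_TB)
  also have "\<dots> = (\<lambda>b. \<Sum>c'\<in>TBZ. v' c' * lift (act epsZ xs ls g' (dl c')) b)" by (rule lift_sum)
  also have "\<dots> = (\<lambda>b. \<Sum>c'\<in>TBZ. v' c' * chain eps xs ls gs (dl (embL c')) b)" using per by simp
  also have "\<dots> = chain eps xs ls gs (\<lambda>b. \<Sum>c'\<in>TBZ. v' c' * dl (embL c') b)"
    by (rule chain_sum[symmetric]) (simp add: TBZ_TB finite_TB)
  also have "\<dots> = chain eps xs ls gs (lift v')" using lift_decomp[OF v] by simp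
  finally show ?thesis .
qed

end

lemma segE: "1 \<le> a \<Longrightarrow> a \<le> b \<Longrightarrow> b \<le> k \<Longrightarrow>
  ok k b (map E (rev [a..<b])) \<and> endp k b (map E (rev [a..<b])) = a \<and> vis k b (map E (rev [a..<b])) = rev [a..<b]"
proof (induction b)
  case 0 thus ?case by simp
next
  case (Suc b)
  show ?case
  proof (cases "a = Suc b")
    case True thus ?thesis by simp
  next
    case False
    hence ab: "a \<le> b" using Suc.prems by simp
    have IH: "ok k b (map E (rev [a..<b])) \<and> endp k b (map E (rev [a..<b])) = a \<and> vis k b (map E (rev [a..<b])) = rev [a..<b]"
      using Suc.IH Suc.prems ab by simp
    have ia: "ia k b = b" using ab Suc.prems by (simp add: ia_def)
    show ?thesis using IH ab Suc.prems ia by simp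
  qed
qed

lemma segF: "1 \<le> a \<Longrightarrow> a \<le> b \<Longrightarrow> b \<le> k \<Longrightarrow>
  ok k a (map F [a..<b]) \<and> endp k a (map F [a..<b]) = b \<and> vis k a (map F [a..<b]) = [Suc a..<Suc b]"
proof (induction b)
  case 0 thus ?case by simp
next
  case (Suc b)
  show ?case
  proof (cases "a = Suc b")
    case True thus ?thesis by simp
  next
    case False
    hence ab: "a \<le> b" using Suc.prems by simp
    have IH: "ok k a (map F [a..<b]) \<and> endp k a (map F [a..<b]) = b \<and> vis k a (map F [a..<b]) = [Suc a..<Suc b]"
      using Suc.IH Suc.prems ab by simp
    have ia: "ia k b = b" using ab Suc.prems by (simp add: ia_def)
    show ?thesis using IH ab Suc.prems ia by (simp add: ok_append endp_append vis_append)
  qed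
qed

lemma isEF_valid: "isEF k g \<Longrightarrow> valid_gen k g"
  by (cases g) (auto simp: valid_gen_def)

lemma ok_valid: "ok k c gs \<Longrightarrow> \<forall>g\<in>set gs. valid_gen k g"
  by (induction gs arbitrary: c) (auto intro: isEF_valid)

context ctxB begin

definition gsE :: "nat \<Rightarrow> gen list" where
  "gsE j = (if j = 0 then map E (rev [1..<zf 1]) @ [E 0] @ map E (rev [zf M..<k]) else map E (rev [zf j..<zf (Suc j)]))"
definition gsF :: "nat \<Rightarrow> gen list" where
  "gsF j = (if j = 0 then map F [zf M..<k] @ [F 0] @ map F [1..<zf 1] else map F [zf j..<zf (Suc j)])"

lemma M2': "2 \<le> M" using M2 by (simp add: zs_def)

lemma zf1: "1 \<le> zf 1" "zf 1 \<le> k" and zfM: "1 \<le> zf M" "zf M \<le> k"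
  using zf_range[of 1] zf_range[of M] M2' by auto

lemma prodXE: "(\<forall>i\<in>set L. 0 < i) \<Longrightarrow> (\<Prod>g\<leftarrow>map E L. Xf g x) = 1"
  by (induction L) auto
lemma prodXF: "(\<forall>i\<in>set L. 0 < i) \<Longrightarrow> (\<Prod>g\<leftarrow>map F L. Xf g x) = 1"
  by (induction L) auto

lemma pathE:
  assumes j: "j < M"
  shows "ok k (zf (src M (E j))) (gsE j) \<and> gsE j \<noteq> []
    \<and> (\<forall>c\<in>set (butlast (vis k (zf (src M (E j))) (gsE j))). one c)
    \<and> endp k (zf (src M (E j))) (gsE j) = zf (tgt M (E j))
    \<and> (\<forall>g\<in>set (gsE j). \<forall>p. side r g p = side r (E j) p)
    \<and> (\<forall>p<r. (\<Prod>g\<leftarrow>gsE j. Xf g (xs ! p)) = Xf (E j) (xs ! p))"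
proof (cases "j = 0")
  case False
  have j1: "j \<in> {1..M}" and j2: "Suc j \<in> {1..M}" using j False by auto
  have lt: "zf j < zf (Suc j)" using zf_mono[of j "Suc j"] j False by simp
  have ia: "ia M j = j" using False by (simp add: ia_def)
  have gs: "gsE j = map E (rev [zf j..<zf (Suc j)])" using False by (simp add: gsE_def)
  have s: "ok k (zf (Suc j)) (gsE j) \<and> endp k (zf (Suc j)) (gsE j) = zf j \<and> vis k (zf (Suc j)) (gsE j) = rev [zf j..<zf (Suc j)]"
    unfolding gs using segE[of "zf j" "zf (Suc j)" k] zf_range[OF j1] zf_range[OF j2] lt by simp
  have one: "\<forall>c\<in>set (butlast (vis k (zf (Suc j)) (gsE j))). one c"
    using s lt between_one[OF j1] j2 by auto
  have ne: "gsE j \<noteq> []" using lt gs by simp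
  have xp: "(\<Prod>g\<leftarrow>gsE j. Xf g (xs ! p)) = 1" for p
    unfolding gs using zf_range[OF j1] by (intro prodXE) auto
  show ?thesis using s one ne xp ia False by (auto simp: gs)
next
  case True
  have m1: "1 \<in> {1..M}" and mM: "M \<in> {1..M}" using M2' by auto
  have gs: "gsE 0 = map E (rev [1..<zf 1]) @ [E 0] @ map E (rev [zf M..<k])" by (simp add: gsE_def)
  have A: "ok k (zf 1) (map E (rev [1..<zf 1])) \<and> endp k (zf 1) (map E (rev [1..<zf 1])) = 1
      \<and> vis k (zf 1) (map E (rev [1..<zf 1])) = rev [1..<zf 1]"
    using segE[of 1 "zf 1" k] zf1 by simp
  have C: "ok k k (map E (rev [zf M..<k])) \<and> endp k k (map E (rev [zf M..<k])) = zf M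
      \<and> vis k k (map E (rev [zf M..<k])) = rev [zf M..<k]"
    using segE[of "zf M" k k] zfM by simp
  have k2': "0 < k" using k2 by linarith
  have B: "ok k 1 [E 0] \<and> endp k 1 [E 0] = k \<and> vis k 1 [E 0] = [k]"
    using k2' by (simp add: ia_def)
  have okk: "ok k (zf 1) (gsE 0)" and en: "endp k (zf 1) (gsE 0) = zf M"
    and vi: "vis k (zf 1) (gsE 0) = rev [1..<zf 1] @ [k] @ rev [zf M..<k]"
    unfolding gs using A B C by (simp_all add: ok_append endp_append vis_append)
  have one: "\<forall>c\<in>set (butlast (rev [1..<zf 1] @ [k] @ rev [zf M..<k])). one c"
  proof (cases "zf M = k")
    case True
    have "butlast (rev [1..<zf 1] @ [k] @ rev [zf M..<k]) = rev [1..<zf 1]" using True by simp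
    thus ?thesis using below_one M2' by auto
  next
    case False
    hence lt: "zf M < k" using zfM by simp
    have "butlast (rev [1..<zf 1] @ [k] @ rev [zf M..<k]) = rev [1..<zf 1] @ [k] @ rev [Suc (zf M)..<k]"
    proof -
      have epsne: "eps \<noteq> []" using k2 by (cases eps) auto
      have "[zf M..<k] \<noteq> []" using lt epsne by simp
      thus ?thesis using lt epsne by (simp add: butlast_append)
    qed
    thus ?thesis using below_one above_one M2' lt by auto
  qed
  have xp: "(\<Prod>g\<leftarrow>gsE 0. Xf g (xs ! p)) = xs ! p" for p
  proof -
    have "(\<Prod>g\<leftarrow>map E (rev [1..<zf 1]). Xf g (xs ! p)) = 1" by (intro prodXE) auto
    moreover have "(\<Prod>g\<leftarrow>map E (rev [zf M..<k]). Xf g (xs ! p)) = 1" using zfM by (intro prodXE) auto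
    ultimately show ?thesis unfolding gs by simp
  qed
  show ?thesis using True okk en vi one xp by (auto simp: gs ia_def)
qed

lemma pathF:
  assumes j: "j < M"
  shows "ok k (zf (src M (F j))) (gsF j) \<and> gsF j \<noteq> []
    \<and> (\<forall>c\<in>set (butlast (vis k (zf (src M (F j))) (gsF j))). one c)
    \<and> endp k (zf (src M (F j))) (gsF j) = zf (tgt M (F j))
    \<and> (\<forall>g\<in>set (gsF j). \<forall>p. side r g p = side r (F j) p)
    \<and> (\<forall>p<r. (\<Prod>g\<leftarrow>gsF j. Xf g (xs ! p)) = Xf (F j) (xs ! p))"
proof (cases "j = 0")
  case False
  have j1: "j \<in> {1..M}" and j2: "Suc j \<in> {1..M}" using j False by auto
  have lt: "zf j < zf (Suc j)" using zf_mono[of j "Suc j"] j False by simp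
  have ia: "ia M j = j" using False by (simp add: ia_def)
  have gs: "gsF j = map F [zf j..<zf (Suc j)]" using False by (simp add: gsF_def)
  have s: "ok k (zf j) (gsF j) \<and> endp k (zf j) (gsF j) = zf (Suc j) \<and> vis k (zf j) (gsF j) = [Suc (zf j)..<Suc (zf (Suc j))]"
    unfolding gs using segF[of "zf j" "zf (Suc j)" k] zf_range[OF j1] zf_range[OF j2] lt by simp
  have bl: "butlast [Suc (zf j)..<Suc (zf (Suc j))] = [Suc (zf j)..<zf (Suc j)]"
    using lt by simp
  have one: "\<forall>c\<in>set (butlast (vis k (zf j) (gsF j))). one c"
    using s bl lt between_one[OF j1] j2 by auto
  have ne: "gsF j \<noteq> []" using lt gs by simp
  have xp: "(\<Prod>g\<leftarrow>gsF j. Xf g (xs ! p)) = 1" for p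
    unfolding gs using zf_range[OF j1] by (intro prodXF) auto
  show ?thesis using s one ne xp ia False by (auto simp: gs)
next
  case True
  have gs: "gsF 0 = map F [zf M..<k] @ [F 0] @ map F [1..<zf 1]" by (simp add: gsF_def)
  have A: "ok k (zf M) (map F [zf M..<k]) \<and> endp k (zf M) (map F [zf M..<k]) = k
      \<and> vis k (zf M) (map F [zf M..<k]) = [Suc (zf M)..<Suc k]"
    using segF[of "zf M" k k] zfM by simp
  have C: "ok k 1 (map F [1..<zf 1]) \<and> endp k 1 (map F [1..<zf 1]) = zf 1
      \<and> vis k 1 (map F [1..<zf 1]) = [Suc 1..<Suc (zf 1)]"
    using segF[of 1 "zf 1" k] zf1 by simp
  have k2': "0 < k" using k2 by linarith
  have B: "ok k k [F 0] \<and> endp k k [F 0] = 1 \<and> vis k k [F 0] = [1]"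
    using k2' by (simp add: ia_def)
  have iaM: "ia M 0 = M" by (simp add: ia_def)
  have okk: "ok k (zf M) (gsF 0)" and en: "endp k (zf M) (gsF 0) = zf 1"
    and vi: "vis k (zf M) (gsF 0) = [Suc (zf M)..<Suc k] @ [1] @ [Suc 1..<Suc (zf 1)]"
    unfolding gs using A B C by (simp_all add: ok_append endp_append vis_append)
  have one: "\<forall>c\<in>set (butlast ([Suc (zf M)..<Suc k] @ [1] @ [Suc 1..<Suc (zf 1)])). one c"
  proof (cases "zf 1 = 1")
    case True
    have "butlast ([Suc (zf M)..<Suc k] @ [1] @ [Suc 1..<Suc (zf 1)]) = [Suc (zf M)..<Suc k]" using True by simp
    thus ?thesis using above_one M2' by auto
  next
    case False
    hence lt: "1 < zf 1" using zf1 by simp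
    have "butlast ([Suc (zf M)..<Suc k] @ [1] @ [Suc 1..<Suc (zf 1)]) = [Suc (zf M)..<Suc k] @ [1] @ [Suc 1..<zf 1]"
      using lt by (simp add: butlast_append)
    thus ?thesis using below_one above_one M2' lt by auto
  qed
  have xp: "(\<Prod>g\<leftarrow>gsF 0. Xf g (xs ! p)) = inverse (xs ! p)" for p
  proof -
    have "(\<Prod>g\<leftarrow>map F [zf M..<k]. Xf g (xs ! p)) = 1" using zfM by (intro prodXF) auto
    moreover have "(\<Prod>g\<leftarrow>map F [1..<zf 1]. Xf g (xs ! p)) = 1" by (intro prodXF) auto
    ultimately show ?thesis unfolding gs by simp
  qed
  show ?thesis using True okk en vi one xp iaM by (auto simp: gs)
qed

definition UZ :: "((nat \<Rightarrow> nat) list \<Rightarrow> K) set \<Rightarrow> ((nat \<Rightarrow> nat) list \<Rightarrow> K) set" where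
  "UZ U = {v'. v' \<in> vecs epsZ ls \<and> lift v' \<in> U}"

lemma act_vecs: "act e x l g v \<in> vecs e l"
  by (simp add: act_def vecs_def)

lemma UZ_sub:
  assumes U: "submoduleT eps xs ls U"
  shows "submoduleT epsZ xs ls (UZ U)"
  unfolding submoduleT_def
proof (intro conjI allI impI ballI)
  show "UZ U \<subseteq> vecs epsZ ls" by (auto simp: UZ_def)
  have "lift (\<lambda>_. 0) = (\<lambda>_. 0)" by (simp add: lift_def fun_eq_iff)
  thus "(\<lambda>_. 0) \<in> UZ U" using U by (simp add: UZ_def vecs_def submoduleT_def)
next
  fix u v assume "u \<in> UZ U" "v \<in> UZ U"
  moreover have "lift (\<lambda>b. u b + v b) = (\<lambda>b. lift u b + lift v b)" by (simp add: lift_def fun_eq_iff)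
  ultimately show "(\<lambda>b. u b + v b) \<in> UZ U" using U by (auto simp: UZ_def vecs_def submoduleT_def)
next
  fix c u assume "u \<in> UZ U"
  moreover have "lift (\<lambda>b. c * u b) = (\<lambda>b. c * lift u b)" by (simp add: lift_def fun_eq_iff)
  ultimately show "(\<lambda>b. c * u b) \<in> UZ U" using U by (auto simp: UZ_def vecs_def submoduleT_def)
next
  fix g u assume g: "valid_gen (length epsZ) g" and u: "u \<in> UZ U"
  have uv: "u \<in> vecs epsZ ls" and lu: "lift u \<in> U" using u by (auto simp: UZ_def)
  have "lift (act epsZ xs ls g u) \<in> U"
  proof (cases g)
    case (E j)
    have j: "j < M" using g E by (simp add: valid_gen_def)
    have gE: "isEF M (E j)" using j by simp
    note P = pathE[OF j]
    have "lift (act epsZ xs ls (E j) u) = chain eps xs ls (gsE j) (lift u)"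
      using lift_chain[OF gE _ _ _ _ _ _ uv] P by blast
    moreover have "chain eps xs ls (gsE j) (lift u) \<in> U"
      using sub_chain[OF U ok_valid lu] P by blast
    ultimately show ?thesis using E by simp
  next
    case (F j)
    have j: "j < M" using g F by (simp add: valid_gen_def)
    have gF: "isEF M (F j)" using j by simp
    note P = pathF[OF j]
    have "lift (act epsZ xs ls (F j) u) = chain eps xs ls (gsF j) (lift u)"
      using lift_chain[OF gF _ _ _ _ _ _ uv] P by blast
    moreover have "chain eps xs ls (gsF j) (lift u) \<in> U"
      using sub_chain[OF U ok_valid lu] P by blast
    ultimately show ?thesis using F by simp
  next
    case (W j)
    have j: "j \<in> {1..M}" using g W by (simp add: valid_gen_def)
    have "valid_gen k (W (zf j))" using zf_range[OF j] by (simp add: valid_gen_def)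
    thus ?thesis using W lift_W[OF j] sub_act[OF U lu] by simp
  next
    case (Winv j)
    have j: "j \<in> {1..M}" using g Winv by (simp add: valid_gen_def)
    have "valid_gen k (Winv (zf j))" using zf_range[OF j] by (simp add: valid_gen_def)
    thus ?thesis using Winv lift_Winv[OF j] sub_act[OF U lu] by simp
  qed
  thus "act epsZ xs ls g u \<in> UZ U" by (simp add: UZ_def act_vecs)
qed

end

context ctxB begin

definition n0 :: "nat \<Rightarrow> nat" where "n0 c = (if c \<in> set (take (sum_list ls) zs) then 1 else 0)"

lemma n01: "\<forall>c. n0 c \<le> 1" by (simp add: n0_def)

lemma zs_distinct: "distinct zs"
  using zs_sorted by (simp add: strict_sorted_iff sorted_wrt_iff_nth_less distinct_conv_nth)
    (metis linorder_neqE_nat nat_less_le)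

lemma FF_n0:
  assumes L: "sum_list ls \<le> M"
  shows "FF n0 k = sum_list ls"
proof -
  let ?B = "set (take (sum_list ls) zs)"
  have Bk: "?B \<subseteq> {1..k}" using zs_set set_take_subset by (fastforce simp: zero_def)
  have "FF n0 k = (\<Sum>c\<in>{1..k}. if c \<in> ?B then 1 else 0)" by (simp add: FF_def n0_def)
  also have "\<dots> = card ({1..k} \<inter> ?B)" by (simp add: sum.If_cases)
  also have "{1..k} \<inter> ?B = ?B" using Bk by auto
  also have "card ?B = length (take (sum_list ls) zs)" using zs_distinct by (simp add: distinct_card)
  also have "\<dots> = sum_list ls" using L by simp
  finally show ?thesis .
qed

lemma wt_n0_E0:
  assumes b: "b \<in> TB eps ls" and w: "\<forall>c\<in>{1..k}. wt b c = n0 c"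
  shows "b \<in> E0"
proof (rule zero_supp_E0[OF b], intro allI impI)
  fix t c assume t: "t < r" and nz: "(b ! t) c \<noteq> 0"
  have lb: "length b = r" using b TB_len by blast
  have bt: "b ! t \<in> basisW eps (ls ! t)" using b t by (simp add: TB_def)
  have ck: "c \<in> {1..k}" using basisW_supp[OF bt] nz by simp
  have "(b ! t) c \<le> wt b c" unfolding wt_def lb using t by (intro member_le_sum) auto
  hence "n0 c \<noteq> 0" using w ck nz by auto
  hence "c \<in> set zs" by (auto simp: n0_def dest: in_set_takeD split: if_splits)
  thus "zero c" using zs_set by auto
qed

lemma main_irr:
  assumes irr: "irreducibleT epsZ xs ls" and L: "sum_list ls \<le> M"
  shows "irreducibleT eps xs ls"
  unfolding irreducibleT_def
proof (intro conjI allI impI)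
  have m1: "1 \<in> {1..M}" using M2' by auto
  define b0 where "b0 = map (\<lambda>l. (\<lambda>c. if c = zf 1 then l else 0)) ls"
  have b0T: "b0 \<in> TB eps ls"
  proof -
    have "(\<lambda>c. if c = zf 1 then l else 0) \<in> basisW eps l" for l
      using zf_range[OF m1] zf_zero[OF m1] by (auto simp: basisW_def zero_def)
    thus ?thesis by (simp add: b0_def TB_def)
  qed
  have "dl b0 \<in> vecs eps ls" using b0T by (auto simp: vecs_def dl_def)
  moreover have "dl b0 \<noteq> (\<lambda>_. 0)" by (auto simp: dl_def fun_eq_iff)
  ultimately show "vecs eps ls \<noteq> {\<lambda>_. 0}" by blast
next
  fix U assume U: "submoduleT eps xs ls U"
  show "U = {\<lambda>_. 0} \<or> U = vecs eps ls"
  proof (cases "U = {\<lambda>_. 0}")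
    case True thus ?thesis by simp
  next
    case False
    have z: "(\<lambda>_. 0) \<in> U" using U by (simp add: submoduleT_def)
    then obtain u where u: "u \<in> U" "u \<noteq> (\<lambda>_. 0)" using False by blast
    then obtain b0 where b0: "u b0 \<noteq> 0" by (auto simp: fun_eq_iff)
    obtain u1 where u1: "u1 \<in> U" "u1 b0 \<noteq> 0" "\<forall>b. u1 b \<noteq> 0 \<longrightarrow> wt b = wt b0"
      using weight_vec[OF U u(1) b0] by blast
    obtain u2 b1 where u2: "u2 \<in> U" "u2 b1 \<noteq> 0" "\<forall>b. u2 b \<noteq> 0 \<longrightarrow> (\<forall>c\<in>{1..k}. wt b c = n0 c)"
      using stepA[OF U n01 FF_n0[OF L] u1] by blast
    have u2v: "u2 \<in> vecs eps ls" using sub_vecs[OF U u2(1)] .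
    have u2E: "u2 b \<noteq> 0 \<Longrightarrow> b \<in> E0" for b
      using wt_n0_E0 u2(3) u2v by (auto simp: vecs_def)
    define v' where "v' = (\<lambda>c'. if c' \<in> TBZ then u2 (embL c') else 0)"
    have lv: "lift v' = u2"
    proof
      fix b show "lift v' b = u2 b"
      proof (cases "b \<in> E0")
        case True
        then obtain c'' where c'': "c'' \<in> TBZ" "b = embL c''" by (auto simp: E0_def)
        thus ?thesis using True res_embL by (simp add: lift_def v'_def)
      next
        case False thus ?thesis using u2E by (auto simp: lift_def)
      qed
    qed
    have v'v: "v' \<in> vecs epsZ ls" by (auto simp: v'_def vecs_def TBZ_def)
    have v'U: "v' \<in> UZ U" using v'v lv u2(1) by (simp add: UZ_def)
    have "v' \<noteq> (\<lambda>_. 0)"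
    proof
      assume "v' = (\<lambda>_. 0)"
      hence "lift v' = (\<lambda>_. 0)" by (simp add: lift_def fun_eq_iff)
      thus False using lv u2(2) by simp
    qed
    hence "UZ U \<noteq> {\<lambda>_. 0}" using v'U by blast
    hence UZall: "UZ U = vecs epsZ ls" using irr UZ_sub[OF U] by (auto simp: irreducibleT_def)
    have baseE: "dl (embL c') \<in> U" if c': "c' \<in> TBZ" for c'
    proof -
      have "dl c' \<in> vecs epsZ ls" using c' by (auto simp: vecs_def dl_def TBZ_def)
      hence "dl c' \<in> UZ U" using UZall by simp
      hence "lift (dl c') \<in> U" by (simp add: UZ_def)
      thus ?thesis using lift_dl[OF c'] by simp
    qed
    have base: "\<forall>c\<in>TB eps ls. (\<forall>x\<in>{1..k}. wt c x = n0 x) \<longrightarrow> dl c \<in> U"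
    proof (intro ballI impI)
      fix c assume c: "c \<in> TB eps ls" "\<forall>x\<in>{1..k}. wt c x = n0 x"
      hence "c \<in> E0" using wt_n0_E0 by blast
      then obtain c' where "c' \<in> TBZ" "c = embL c'" by (auto simp: E0_def)
      thus "dl c \<in> U" using baseE by simp
    qed
    have "\<forall>c\<in>TB eps ls. dl c \<in> U" using stepC[OF U n01 FF_n0[OF L] base] by blast
    thus ?thesis using all_dl[OF U] by simp
  qed
qed

end

theorem proposition5p5:
  fixes ls :: "nat list" and xs :: "K list"
  assumes "length xs = length ls"
    and "\<forall>x\<in>set xs. x \<noteq> 0"
  shows "\<exists>N. \<forall>eps :: nat list.
           4 \<le> length eps \<and> set eps \<subseteq> {0, 1} \<and> N \<le> nzeros eps
           \<and> irreducibleT (replicate (nzeros eps) 0) xs ls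
           \<longrightarrow> irreducibleT eps xs ls"
proof (intro exI[of _ "sum_list ls + 2"] allI impI)
  fix eps :: "nat list"
  assume h: "4 \<le> length eps \<and> set eps \<subseteq> {0, 1} \<and> sum_list ls + 2 \<le> nzeros eps
           \<and> irreducibleT (replicate (nzeros eps) 0) xs ls"
  interpret ctx eps xs ls using h assms by unfold_locales auto
  have nz: "nzeros eps = length zs" by (rule nzeros_M)
  interpret ctxB eps xs ls using h nz by unfold_locales simp
  show "irreducibleT eps xs ls" using main_irr h nz by simp
qed

end
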